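(* Let $p\in(0,1)$ be fixed and let $a=\lfloor 2\log_{1/(1-p)}n-8\log_{1/(1-p)}\ln n\rfloor$. With high probability, in $G(n,p)$, for every pair of disjoint sets $A\subset N(1)$ and $B\subset[n]\setminus\{1\}$ with $|A|=|B|=\lfloor n/\ln^2 n\rfloor$, there exists an induced subgraph of $G(n,p)$ isomorphic to $K_{1,a-1}$ whose central vertex lies in $A$ and all of whose other vertices lie in $B$.
   Context: $G(n,p)$ is the binomial random graph on vertex set $[n]$ in which each pair of vertices is adjacent independently with probability $p$; with high probability means with probability tending to $1$ as $n\to\infty$. $N(1)$ denotes the set of neighbours of vertex $1$ in $G(n,p)$. $K_{1,a-1}$ is the star with one central vertex and $a-1$ leaves. *)

theory Defs
  imports "HOL-Probability.Probability"
begin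

definition pairs :: "nat \<Rightarrow> nat set set" where
  "pairs n = {{u, v} | u v. u \<in> {1..n} \<and> v \<in> {1..n} \<and> u \<noteq> v}"

text \<open>The binomial random graph G(n,p): each potential edge present independently with prob. p.
  A graph is encoded by the indicator function of its edge set.\<close>
definition Gnp :: "nat \<Rightarrow> real \<Rightarrow> (nat set \<Rightarrow> bool) pmf" where
  "Gnp n p = Pi_pmf (pairs n) False (\<lambda>_. bernoulli_pmf p)"

definition adj :: "(nat set \<Rightarrow> bool) \<Rightarrow> nat \<Rightarrow> nat \<Rightarrow> bool" where
  "adj G u v \<longleftrightarrow> u \<noteq> v \<and> G {u, v}"

definition nbhd :: "nat \<Rightarrow> (nat set \<Rightarrow> bool) \<Rightarrow> nat \<Rightarrow> nat set" where
  "nbhd n G v = {u \<in> {1..n}. adj G v u}"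

text \<open>The subgraph induced on {c} \<union> L is a star with centre c and leaf set L
  (c \<notin> L, c adjacent to every leaf, no edges among leaves),
  i.e. it is isomorphic to K_{1,|L|} with c mapped to the centre.\<close>
definition induced_star :: "(nat set \<Rightarrow> bool) \<Rightarrow> nat \<Rightarrow> nat set \<Rightarrow> bool" where
  "induced_star G c L \<longleftrightarrow> c \<notin> L \<and> (\<forall>x\<in>L. adj G c x) \<and> (\<forall>x\<in>L. \<forall>y\<in>L. \<not> adj G x y)"

definition star_size :: "real \<Rightarrow> nat \<Rightarrow> int" where
  "star_size p n = \<lfloor>2 * log (1 / (1 - p)) (real n) - 8 * log (1 / (1 - p)) (ln (real n))\<rfloor>"

definition good_event :: "nat \<Rightarrow> real \<Rightarrow> (nat set \<Rightarrow> bool) \<Rightarrow> bool" where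
  "good_event n p G \<longleftrightarrow>
     (\<forall>A B. A \<subseteq> nbhd n G 1 \<and> B \<subseteq> {1..n} - {1} \<and> A \<inter> B = {} \<and>
        card A = nat \<lfloor>real n / (ln (real n))^2\<rfloor> \<and> card B = nat \<lfloor>real n / (ln (real n))^2\<rfloor> \<longrightarrow>
        (\<exists>c\<in>A. \<exists>L\<subseteq>B. card L = nat (star_size p n - 1) \<and> induced_star G c L))"

end

theory Submission
  imports Defs "HOL-Real_Asymp.Real_Asymp"
begin

definition allF :: "'a set \<Rightarrow> ('a \<Rightarrow> bool) set" where
  "allF T = {G. \<forall>e\<in>T. \<not> G e}"

definition clr :: "'a set \<Rightarrow> ('a \<Rightarrow> bool) \<Rightarrow> ('a \<Rightarrow> bool)" where
  "clr T G = (\<lambda>e. if e \<in> T then False else G e)"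

lemma prob_product_pmf_gen:
  fixes M :: "'a pmf" and N :: "'b pmf"
  assumes "finite (set_pmf M)" "finite (set_pmf N)"
  shows "measure_pmf.prob (pair_pmf M N) (A \<times> B) = measure_pmf.prob M A * measure_pmf.prob N B"
proof -
  have "measure_pmf.prob (pair_pmf M N) (A \<times> B) = measure_pmf.prob (pair_pmf M N) ((A \<times> B) \<inter> set_pmf (pair_pmf M N))"
    by (rule measure_Int_set_pmf[symmetric])
  also have "(A \<times> B) \<inter> set_pmf (pair_pmf M N) = (A \<inter> set_pmf M) \<times> (B \<inter> set_pmf N)"
    by (auto simp: set_pair_pmf)
  also have "measure_pmf.prob (pair_pmf M N) \<dots> = measure_pmf.prob M (A \<inter> set_pmf M) * measure_pmf.prob N (B \<inter> set_pmf N)"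
    using assms by (intro measure_pmf_prob_product) (auto intro: countable_finite)
  finally show ?thesis by (simp add: measure_Int_set_pmf)
qed

lemma finite_set_Pi_pmf_bool:
  fixes D :: "'a \<Rightarrow> bool pmf"
  assumes "finite A"
  shows "finite (set_pmf (Pi_pmf A dflt D))"
proof -
  have "set_pmf (Pi_pmf A dflt D) \<subseteq> PiE_dflt A dflt (\<lambda>_. UNIV)"
    using assms by (auto simp: set_Pi_pmf PiE_dflt_def)
  moreover have "finite (PiE_dflt A dflt (\<lambda>_. (UNIV :: bool set)))"
    using assms by (intro finite_PiE_dflt) auto
  ultimately show ?thesis by (rule finite_subset)
qed

definition jv :: "real \<Rightarrow> ('i \<Rightarrow> 'a set) \<Rightarrow> 'i \<Rightarrow> 'i \<Rightarrow> real" where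
  "jv q T i j = (if i \<noteq> j \<and> T i \<inter> T j \<noteq> {} then q ^ card (T i \<union> T j) else 0)"

context
  fixes E :: "'a set" and p :: real
  assumes finE: "finite E" and p0: "0 \<le> p" and p1: "p \<le> 1"
begin

abbreviation "MM \<equiv> Pi_pmf E False (\<lambda>_. bernoulli_pmf p)"

lemma key_indep:
  assumes T: "T \<subseteq> E" and Z: "\<And>G. G \<in> Z \<longleftrightarrow> clr T G \<in> Z"
  shows "measure_pmf.prob MM (allF T \<inter> Z) = measure_pmf.prob MM (allF T) * measure_pmf.prob MM Z"
proof -
  have finT: "finite T" using T finE by (rule finite_subset)
  have finR: "finite (E - T)" using finE by simp
  define h :: "('a \<Rightarrow> bool) \<times> ('a \<Rightarrow> bool) \<Rightarrow> ('a \<Rightarrow> bool)" where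
    "h = (\<lambda>(f,g) x. if x \<in> T then f x else g x)"
  define M1 where "M1 = Pi_pmf T False (\<lambda>_. bernoulli_pmf p)"
  define M2 where "M2 = Pi_pmf (E - T) False (\<lambda>_. bernoulli_pmf p)"
  have EE: "E = T \<union> (E - T)" using T by blast
  have MMeq: "MM = map_pmf h (pair_pmf M1 M2)"
    unfolding h_def M1_def M2_def
    by (subst EE, rule Pi_pmf_union) (use finT finR in auto)
  have f1: "finite (set_pmf M1)" unfolding M1_def by (rule finite_set_Pi_pmf_bool[OF finT])
  have f2: "finite (set_pmf M2)" unfolding M2_def by (rule finite_set_Pi_pmf_bool[OF finR])
  define A1 where "A1 = {f::'a\<Rightarrow>bool. \<forall>e\<in>T. \<not> f e}"
  define B1 where "B1 = {g. (\<lambda>e. if e \<in> T then False else g e) \<in> Z}"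
  have cl: "clr T (h (f, g)) = (\<lambda>e. if e \<in> T then False else g e)" for f g
    by (auto simp: clr_def h_def fun_eq_iff)
  have pre1: "h -` (allF T \<inter> Z) = A1 \<times> B1"
  proof -
    have "h (f,g) \<in> Z \<longleftrightarrow> g \<in> B1" for f g using Z[of "h (f,g)"] cl[of f g] by (simp add: B1_def)
    moreover have "h (f,g) \<in> allF T \<longleftrightarrow> f \<in> A1" for f g by (auto simp: allF_def A1_def h_def)
    ultimately show ?thesis by auto
  qed
  have pre2: "h -` (allF T) = A1 \<times> UNIV"
    by (auto simp: allF_def A1_def h_def)
  have pre3: "h -` Z = UNIV \<times> B1"
  proof -
    have "h (f,g) \<in> Z \<longleftrightarrow> g \<in> B1" for f g using Z[of "h (f,g)"] cl[of f g] by (simp add: B1_def)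
    thus ?thesis by auto
  qed
  show ?thesis
    unfolding MMeq measure_map_pmf pre1 pre2 pre3
    using f1 f2 by (simp add: prob_product_pmf_gen)
qed

lemma prob_allF:
  assumes T: "T \<subseteq> E"
  shows "measure_pmf.prob MM (allF T) = (1 - p) ^ card T"
proof -
  have finT: "finite T" using T finE by (rule finite_subset)
  have "allF T = Pi E (\<lambda>x. if x \<in> T then {False} else UNIV)"
    using T by (auto simp: allF_def Pi_def)
  hence "measure_pmf.prob MM (allF T) = (\<Prod>x\<in>E. measure_pmf.prob (bernoulli_pmf p) (if x \<in> T then {False} else UNIV))"
    using finE by (simp add: measure_Pi_pmf_Pi)
  also have "\<dots> = (\<Prod>x\<in>E. if x \<in> T then 1 - p else 1)"
    by (intro prod.cong refl) (simp add: measure_pmf_single pmf_bernoulli_False p0 p1)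
  also have "\<dots> = (\<Prod>x\<in>T. 1 - p)"
    using finE T by (simp add: prod.If_cases Int_absorb1)
  finally show ?thesis using finT by simp
qed

lemma indep_disjoint:
  assumes T: "T \<subseteq> E" and Z: "\<And>G. G \<in> Z \<longleftrightarrow> clr T G \<in> Z"
  shows "measure_pmf.prob MM (allF T \<inter> Z) = (1 - p) ^ card T * measure_pmf.prob MM Z"
  using key_indep[OF T Z] prob_allF[OF T] by simp

lemma harris_like:
  assumes T: "T \<subseteq> E" and Y: "\<And>G G'. G \<in> Y \<Longrightarrow> (\<And>e. G e \<Longrightarrow> G' e) \<Longrightarrow> G' \<in> Y"
  shows "measure_pmf.prob MM (allF T \<inter> Y) \<le> (1 - p) ^ card T * measure_pmf.prob MM Y"
proof -
  define Z where "Z = {G. clr T G \<in> Y}"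
  have eq: "allF T \<inter> Y = allF T \<inter> Z"
  proof -
    have "G \<in> allF T \<Longrightarrow> clr T G = G" for G by (auto simp: allF_def clr_def fun_eq_iff)
    thus ?thesis by (auto simp: Z_def)
  qed
  have Zi: "G \<in> Z \<longleftrightarrow> clr T G \<in> Z" for G
    by (simp add: Z_def clr_def fun_eq_iff cong: if_cong)
  have ZY: "Z \<subseteq> Y"
    using Y by (auto simp: Z_def clr_def split: if_splits)
  have "measure_pmf.prob MM (allF T \<inter> Y) = (1 - p) ^ card T * measure_pmf.prob MM Z"
    unfolding eq by (rule indep_disjoint[OF T Zi])
  also have "\<dots> \<le> (1 - p) ^ card T * measure_pmf.prob MM Y"
    using ZY p1 by (intro mult_left_mono measure_pmf.finite_measure_mono) auto
  finally show ?thesis .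
qed


lemma jv_nonneg: "0 \<le> q \<Longrightarrow> 0 \<le> jv q T i j"
  by (simp add: jv_def)

lemma janson_step:
  assumes F: "finite F" and a: "a \<notin> F" and TE: "\<And>i. i \<in> insert a F \<Longrightarrow> T i \<subseteq> E"
  defines "C \<equiv> {G. \<forall>i\<in>F. \<exists>e\<in>T i. G e}"
  shows "measure_pmf.prob MM (C \<inter> allF (T a)) \<ge>
           measure_pmf.prob MM C * ((1 - p) ^ card (T a) - (\<Sum>j\<in>F. jv (1 - p) T a j))"
proof -
  define q where "q = 1 - p"
  have q0: "0 \<le> q" using p1 by (simp add: q_def)
  define Ov where "Ov = {j\<in>F. T j \<inter> T a \<noteq> {}}"
  define N where "N = {G. \<forall>j\<in>F - Ov. \<exists>e\<in>T j. G e}"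
  have finOv: "finite Ov" using F by (simp add: Ov_def)
  have Ta: "T a \<subseteq> E" using TE by simp
  have CN: "C \<subseteq> N" by (auto simp: C_def N_def)
  have Ninv: "G \<in> N \<longleftrightarrow> clr (T a) G \<in> N" for G
  proof -
    have "\<forall>j\<in>F - Ov. \<forall>e\<in>T j. clr (T a) G e = G e"
      by (auto simp: Ov_def clr_def)
    hence "(\<forall>j\<in>F - Ov. \<exists>e\<in>T j. G e) \<longleftrightarrow> (\<forall>j\<in>F - Ov. \<exists>e\<in>T j. clr (T a) G e)"
      by blast
    thus ?thesis unfolding N_def by simp
  qed
  have Nmono: "G' \<in> N" if "G \<in> N" "\<And>e. G e \<Longrightarrow> G' e" for G G'
    using that by (auto simp: N_def)
  have cover: "allF (T a) \<inter> N \<subseteq> (C \<inter> allF (T a)) \<union> (\<Union>j\<in>Ov. allF (T a \<union> T j) \<inter> N)"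
  proof
    fix G assume G: "G \<in> allF (T a) \<inter> N"
    show "G \<in> (C \<inter> allF (T a)) \<union> (\<Union>j\<in>Ov. allF (T a \<union> T j) \<inter> N)"
    proof (cases "G \<in> C")
      case True thus ?thesis using G by auto
    next
      case False
      then obtain j where j: "j \<in> F" "\<forall>e\<in>T j. \<not> G e" by (auto simp: C_def)
      have "j \<in> Ov" using G j by (auto simp: N_def)
      thus ?thesis using G j by (auto simp: allF_def)
    qed
  qed
  have h1: "measure_pmf.prob MM (allF (T a) \<inter> N) \<le>
        measure_pmf.prob MM ((C \<inter> allF (T a)) \<union> (\<Union>j\<in>Ov. allF (T a \<union> T j) \<inter> N))"
    by (rule measure_pmf.finite_measure_mono[OF cover]) simp
  have h1': "measure_pmf.prob MM ((C \<inter> allF (T a)) \<union> (\<Union>j\<in>Ov. allF (T a \<union> T j) \<inter> N)) \<le> measure_pmf.prob MM (C \<inter> allF (T a)) + measure_pmf.prob MM (\<Union>j\<in>Ov. allF (T a \<union> T j) \<inter> N)"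
    by (rule measure_Un_le) simp_all
  have h2: "measure_pmf.prob MM (\<Union>j\<in>Ov. allF (T a \<union> T j) \<inter> N) \<le> (\<Sum>j\<in>Ov. measure_pmf.prob MM (allF (T a \<union> T j) \<inter> N))"
    by (rule measure_pmf.finite_measure_subadditive_finite[OF finOv]) simp
  have h3: "(\<Sum>j\<in>Ov. measure_pmf.prob MM (allF (T a \<union> T j) \<inter> N)) \<le> (\<Sum>j\<in>Ov. q ^ card (T a \<union> T j) * measure_pmf.prob MM N)"
  proof (rule sum_mono)
    fix j assume j: "j \<in> Ov"
    have "T a \<union> T j \<subseteq> E" using TE j by (auto simp: Ov_def)
    thus "measure_pmf.prob MM (allF (T a \<union> T j) \<inter> N) \<le> q ^ card (T a \<union> T j) * measure_pmf.prob MM N"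
      unfolding q_def by (rule harris_like) (rule Nmono)
  qed
  have h4: "(\<Sum>j\<in>Ov. q ^ card (T a \<union> T j)) = (\<Sum>j\<in>F. jv q T a j)"
  proof -
    have "(\<Sum>j\<in>F. jv q T a j) = (\<Sum>j\<in>Ov. jv q T a j)"
      using F a by (intro sum.mono_neutral_right) (auto simp: Ov_def jv_def)
    also have "\<dots> = (\<Sum>j\<in>Ov. q ^ card (T a \<union> T j))"
      using a by (intro sum.cong refl) (auto simp: Ov_def jv_def)
    finally show ?thesis by simp
  qed
  have h5: "(\<Sum>j\<in>Ov. q ^ card (T a \<union> T j) * measure_pmf.prob MM N) = (\<Sum>j\<in>F. jv q T a j) * measure_pmf.prob MM N"
    by (simp add: sum_distrib_right h4[symmetric])
  have "measure_pmf.prob MM (allF (T a) \<inter> N) \<le> measure_pmf.prob MM (C \<inter> allF (T a)) + (\<Sum>j\<in>F. jv q T a j) * measure_pmf.prob MM N"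
    using h1 h1' h2 h3 h5 by linarith
  moreover have "measure_pmf.prob MM (allF (T a) \<inter> N) = q ^ card (T a) * measure_pmf.prob MM N"
    unfolding q_def by (rule indep_disjoint[OF Ta Ninv])
  ultimately have main: "measure_pmf.prob MM (C \<inter> allF (T a)) \<ge> measure_pmf.prob MM N * (q ^ card (T a) - (\<Sum>j\<in>F. jv q T a j))"
    by (simp add: algebra_simps)
  show ?thesis
  proof (cases "q ^ card (T a) - (\<Sum>j\<in>F. jv q T a j) \<ge> 0")
    case True
    have "measure_pmf.prob MM C \<le> measure_pmf.prob MM N"
      by (rule measure_pmf.finite_measure_mono[OF CN]) simp
    hence "measure_pmf.prob MM C * (q ^ card (T a) - (\<Sum>j\<in>F. jv q T a j)) \<le> measure_pmf.prob MM N * (q ^ card (T a) - (\<Sum>j\<in>F. jv q T a j))"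
      using True by (rule mult_right_mono)
    thus ?thesis using main by (simp add: q_def)
  next
    case False
    hence "measure_pmf.prob MM C * (q ^ card (T a) - (\<Sum>j\<in>F. jv q T a j)) \<le> 0"
      by (simp add: mult_nonneg_nonpos)
    thus ?thesis by (simp add: q_def order_trans[OF _ measure_nonneg])
  qed
qed

lemma janson_basic:
  assumes F: "finite F" and TE: "\<And>i. i \<in> F \<Longrightarrow> T i \<subseteq> E"
  shows "measure_pmf.prob MM {G. \<forall>i\<in>F. \<exists>e\<in>T i. G e} \<le>
           exp (- (\<Sum>i\<in>F. (1 - p) ^ card (T i)) + (\<Sum>i\<in>F. \<Sum>j\<in>F. jv (1 - p) T i j))"
  using F TE
proof (induction F rule: finite_induct)
  case empty
  show ?case by simp
next
  case (insert a F)
  define q where "q = 1 - p"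
  have q0: "0 \<le> q" using p1 by (simp add: q_def)
  define C where "C = {G. \<forall>i\<in>F. \<exists>e\<in>T i. G e}"
  have IH: "measure_pmf.prob MM C \<le> exp (- (\<Sum>i\<in>F. q ^ card (T i)) + (\<Sum>i\<in>F. \<Sum>j\<in>F. jv q T i j))"
    using insert by (simp add: C_def q_def)
  have st: "measure_pmf.prob MM (C \<inter> allF (T a)) \<ge>
           measure_pmf.prob MM C * (q ^ card (T a) - (\<Sum>j\<in>F. jv q T a j))"
    unfolding C_def q_def by (rule janson_step) (use insert in auto)
  have eqset: "{G. \<forall>i\<in>insert a F. \<exists>e\<in>T i. G e} = C - (C \<inter> allF (T a))"
    by (auto simp: C_def allF_def)
  have "measure_pmf.prob MM {G. \<forall>i\<in>insert a F. \<exists>e\<in>T i. G e} = measure_pmf.prob MM C - measure_pmf.prob MM (C \<inter> allF (T a))"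
    unfolding eqset by (rule measure_pmf.finite_measure_Diff) auto
  also have "\<dots> \<le> measure_pmf.prob MM C * (1 + (- (q ^ card (T a)) + (\<Sum>j\<in>F. jv q T a j)))"
    using st by (simp add: algebra_simps)
  also have "\<dots> \<le> measure_pmf.prob MM C * exp (- (q ^ card (T a)) + (\<Sum>j\<in>F. jv q T a j))"
    by (intro mult_left_mono exp_ge_add_one_self) simp
  also have "\<dots> \<le> exp (- (\<Sum>i\<in>F. q ^ card (T i)) + (\<Sum>i\<in>F. \<Sum>j\<in>F. jv q T i j)) * exp (- (q ^ card (T a)) + (\<Sum>j\<in>F. jv q T a j))"
    by (intro mult_right_mono IH) simp
  also have "\<dots> = exp (- (\<Sum>i\<in>insert a F. q ^ card (T i)) + ((\<Sum>i\<in>F. \<Sum>j\<in>F. jv q T i j) + (\<Sum>j\<in>F. jv q T a j)))"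
    using insert by (simp add: exp_add[symmetric] algebra_simps)
  also have "\<dots> \<le> exp (- (\<Sum>i\<in>insert a F. q ^ card (T i)) + (\<Sum>i\<in>insert a F. \<Sum>j\<in>insert a F. jv q T i j))"
  proof -
    have "(\<Sum>i\<in>insert a F. \<Sum>j\<in>insert a F. jv q T i j) = (\<Sum>j\<in>insert a F. jv q T a j) + (\<Sum>i\<in>F. \<Sum>j\<in>insert a F. jv q T i j)"
      using insert by simp
    also have "(\<Sum>j\<in>insert a F. jv q T a j) = jv q T a a + (\<Sum>j\<in>F. jv q T a j)"
      using insert by simp
    also have "(\<Sum>i\<in>F. \<Sum>j\<in>insert a F. jv q T i j) = (\<Sum>i\<in>F. jv q T i a) + (\<Sum>i\<in>F. \<Sum>j\<in>F. jv q T i j)"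
      using insert by (simp add: sum.distrib)
    finally have "(\<Sum>i\<in>insert a F. \<Sum>j\<in>insert a F. jv q T i j) \<ge> (\<Sum>i\<in>F. \<Sum>j\<in>F. jv q T i j) + (\<Sum>j\<in>F. jv q T a j)"
      using q0 by (simp add: jv_nonneg sum_nonneg)
    thus ?thesis by simp
  qed
  finally show ?case by (simp add: q_def)
qed

end

definition Phi :: "'i set \<Rightarrow> ('i \<Rightarrow> real) \<Rightarrow> ('i \<Rightarrow> 'i \<Rightarrow> real) \<Rightarrow> ('i \<Rightarrow> real) \<Rightarrow> real" where
  "Phi I w v x = (\<Sum>i\<in>I. x i * w i) - (\<Sum>i\<in>I. \<Sum>j\<in>I. x i * x j * v i j)"

lemma sum_affine: "(\<Sum>i\<in>I. (1 - y) * f i + y * g i) = (1 - y) * sum f I + y * (sum g I :: real)"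
  by (simp add: sum.distrib sum_distrib_left)

lemma Phi_affine:
  assumes vaa: "v a a = 0"
  shows "Phi I w v (x(a := y)) = (1 - y) * Phi I w v (x(a := 0)) + y * Phi I w v (x(a := 1))"
proof -
  have t1: "(x(a:=y)) i * w i = (1 - y) * ((x(a:=0)) i * w i) + y * ((x(a:=1)) i * w i)" for i
    by (simp add: algebra_simps)
  have t2: "(x(a:=y)) i * (x(a:=y)) j * v i j = (1 - y) * ((x(a:=0)) i * (x(a:=0)) j * v i j) + y * ((x(a:=1)) i * (x(a:=1)) j * v i j)" for i j
    using vaa by (cases "i = a"; cases "j = a") (simp_all add: algebra_simps)
  have s1: "(\<Sum>i\<in>I. (x(a:=y)) i * w i) = (\<Sum>i\<in>I. (1 - y) * ((x(a:=0)) i * w i) + y * ((x(a:=1)) i * w i))"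
    by (rule sum.cong[OF refl t1])
  have s2: "(\<Sum>i\<in>I. \<Sum>j\<in>I. (x(a:=y)) i * (x(a:=y)) j * v i j) = (\<Sum>i\<in>I. \<Sum>j\<in>I. (1 - y) * ((x(a:=0)) i * (x(a:=0)) j * v i j) + y * ((x(a:=1)) i * (x(a:=1)) j * v i j))"
    by (rule sum.cong[OF refl sum.cong[OF refl t2]])
  show ?thesis
    unfolding Phi_def s1 s2 sum_affine
    by (simp add: algebra_simps)
qed

lemma Phi_round:
  assumes fin: "finite I" and vdiag: "\<And>i. v i i = 0"
  shows "\<And>x. (\<And>i. 0 \<le> x i \<and> x i \<le> 1) \<Longrightarrow> card {i\<in>I. x i \<noteq> 0 \<and> x i \<noteq> 1} = k \<Longrightarrow>
           \<exists>F\<subseteq>I. Phi I w v x \<le> Phi I w v (\<lambda>i. if i \<in> F then 1 else 0)"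
proof (induction k arbitrary: rule: less_induct)
  case (less k x)
  show ?case
  proof (cases "{i\<in>I. x i \<noteq> 0 \<and> x i \<noteq> 1} = {}")
    case True
    define F where "F = {i\<in>I. x i = 1}"
    have "Phi I w v x = Phi I w v (\<lambda>i. if i \<in> F then 1 else 0)"
    proof -
      have "\<forall>i\<in>I. x i = (if i \<in> F then 1 else 0)" using True by (auto simp: F_def)
      thus ?thesis unfolding Phi_def by (intro arg_cong2[where f="(-)"] sum.cong refl) auto
    qed
    thus ?thesis by (intro exI[of _ F]) (auto simp: F_def)
  next
    case False
    then obtain a where a: "a \<in> I" "x a \<noteq> 0" "x a \<noteq> 1" by auto
    have fS: "finite {i\<in>I. x i \<noteq> 0 \<and> x i \<noteq> 1}" using fin by simp
    have aff: "Phi I w v x = (1 - x a) * Phi I w v (x(a := 0)) + x a * Phi I w v (x(a := 1))"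
      using Phi_affine[of v a I w x "x a"] vdiag by simp
    have le: "Phi I w v x \<le> max (Phi I w v (x(a := 0))) (Phi I w v (x(a := 1)))"
    proof -
      have "0 \<le> x a" "x a \<le> 1" using less.prems by auto
      hence "(1 - x a) * Phi I w v (x(a := 0)) + x a * Phi I w v (x(a := 1)) \<le>
             (1 - x a) * max (Phi I w v (x(a := 0))) (Phi I w v (x(a := 1))) + x a * max (Phi I w v (x(a := 0))) (Phi I w v (x(a := 1)))"
        by (intro add_mono mult_left_mono) auto
      thus ?thesis using aff by (simp add: algebra_simps)
    qed
    have rec: "\<exists>F\<subseteq>I. Phi I w v (x(a := c)) \<le> Phi I w v (\<lambda>i. if i \<in> F then 1 else 0)" if c: "c = 0 \<or> c = 1" for c
    proof -
      have sub: "{i\<in>I. (x(a:=c)) i \<noteq> 0 \<and> (x(a:=c)) i \<noteq> 1} = {i\<in>I. x i \<noteq> 0 \<and> x i \<noteq> 1} - {a}"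
        using c by auto
      have "card ({i\<in>I. x i \<noteq> 0 \<and> x i \<noteq> 1} - {a}) < k"
        using less.prems(2) a fS by (metis (mono_tags, lifting) card_Diff1_less mem_Collect_eq)
      thus ?thesis
        by (intro less.IH[OF _ _ refl]) (use less.prems c sub in auto)
    qed
    show ?thesis
    proof (cases "Phi I w v (x(a := 0)) \<le> Phi I w v (x(a := 1))")
      case True
      then obtain F where "F \<subseteq> I" "Phi I w v (x(a := 1)) \<le> Phi I w v (\<lambda>i. if i \<in> F then 1 else 0)"
        using rec[of 1] by auto
      thus ?thesis using le True by (intro exI[of _ F]) auto
    next
      case False
      then obtain F where "F \<subseteq> I" "Phi I w v (x(a := 0)) \<le> Phi I w v (\<lambda>i. if i \<in> F then 1 else 0)"
        using rec[of 0] by auto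
      thus ?thesis using le False by (intro exI[of _ F]) auto
    qed
  qed
qed

lemma exists_subfamily:
  fixes w :: "'i \<Rightarrow> real"
  assumes fin: "finite I" and vdiag: "\<And>i. v i i = 0" and t: "0 \<le> t" "t \<le> 1"
  shows "\<exists>F\<subseteq>I. t * (\<Sum>i\<in>I. w i) - t\<^sup>2 * (\<Sum>i\<in>I. \<Sum>j\<in>I. v i j) \<le>
                 (\<Sum>i\<in>F. w i) - (\<Sum>i\<in>F. \<Sum>j\<in>F. v i j)"
proof -
  have "\<exists>F\<subseteq>I. Phi I w v (\<lambda>_. t) \<le> Phi I w v (\<lambda>i. if i \<in> F then 1 else 0)"
    by (rule Phi_round[OF fin]) (use vdiag t in auto)
  then obtain F where F: "F \<subseteq> I" "Phi I w v (\<lambda>_. t) \<le> Phi I w v (\<lambda>i. if i \<in> F then 1 else 0)"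
    by blast
  have e1: "Phi I w v (\<lambda>_. t) = t * (\<Sum>i\<in>I. w i) - t\<^sup>2 * (\<Sum>i\<in>I. \<Sum>j\<in>I. v i j)"
    by (simp add: Phi_def sum_distrib_left power2_eq_square mult.assoc)
  have e2: "Phi I w v (\<lambda>i. if i \<in> F then 1 else 0) = (\<Sum>i\<in>F. w i) - (\<Sum>i\<in>F. \<Sum>j\<in>F. v i j)"
  proof -
    have fF: "finite F" using F fin finite_subset by blast
    have "(\<Sum>i\<in>I. (if i \<in> F then 1 else 0) * w i) = (\<Sum>i\<in>F. w i)"
    proof -
      have "(\<Sum>i\<in>I. (if i \<in> F then 1 else 0) * w i) = (\<Sum>i\<in>I. if i \<in> F then w i else 0)"
        by (intro sum.cong refl) auto
      also have "\<dots> = (\<Sum>i\<in>F. w i)" using F fin by (simp add: sum.If_cases Int_absorb1)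
      finally show ?thesis .
    qed
    moreover have "(\<Sum>i\<in>I. \<Sum>j\<in>I. (if i \<in> F then 1 else 0) * (if j \<in> F then 1 else 0) * v i j) = (\<Sum>i\<in>F. \<Sum>j\<in>F. v i j)"
    proof -
      have "(\<Sum>i\<in>I. \<Sum>j\<in>I. (if i \<in> F then 1 else 0) * (if j \<in> F then 1 else 0) * v i j) =
            (\<Sum>i\<in>I. if i \<in> F then (\<Sum>j\<in>I. if j \<in> F then v i j else 0) else 0)"
        by (intro sum.cong refl) (auto intro!: sum.cong)
      also have "\<dots> = (\<Sum>i\<in>F. \<Sum>j\<in>F. v i j)"
        using F fin by (simp add: sum.If_cases Int_absorb1)
      finally show ?thesis .
    qed
    ultimately show ?thesis unfolding Phi_def by simp
  qed
  show ?thesis using F e1 e2 by auto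
qed

lemma janson_ext:
  fixes E :: "'a set" and T :: "'i \<Rightarrow> 'a set"
  assumes finE: "finite E" and p: "0 \<le> p" "p \<le> 1"
  assumes F: "finite F" and TE: "\<And>i. i \<in> F \<Longrightarrow> T i \<subseteq> E"
  defines "\<mu> \<equiv> (\<Sum>i\<in>F. (1 - p) ^ card (T i))"
  defines "D \<equiv> (\<Sum>i\<in>F. \<Sum>j\<in>F. jv (1 - p) T i j)"
  assumes t: "0 \<le> t" "t \<le> 1"
  shows "measure_pmf.prob (Pi_pmf E False (\<lambda>_. bernoulli_pmf p)) {G. \<forall>i\<in>F. \<exists>e\<in>T i. G e} \<le> exp (- (t * \<mu> - t\<^sup>2 * D))"
proof -
  obtain F' where F': "F' \<subseteq> F" "t * \<mu> - t\<^sup>2 * D \<le> (\<Sum>i\<in>F'. (1 - p) ^ card (T i)) - (\<Sum>i\<in>F'. \<Sum>j\<in>F'. jv (1 - p) T i j)"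
    using exists_subfamily[OF F, of "jv (1 - p) T" t "\<lambda>i. (1 - p) ^ card (T i)"] t
    unfolding \<mu>_def D_def by (auto simp: jv_def)
  have fF': "finite F'" using F' F finite_subset by blast
  have "measure_pmf.prob (Pi_pmf E False (\<lambda>_. bernoulli_pmf p)) {G. \<forall>i\<in>F. \<exists>e\<in>T i. G e}
        \<le> measure_pmf.prob (Pi_pmf E False (\<lambda>_. bernoulli_pmf p)) {G. \<forall>i\<in>F'. \<exists>e\<in>T i. G e}"
    using F' by (intro measure_pmf.finite_measure_mono) auto
  also have "\<dots> \<le> exp (- (\<Sum>i\<in>F'. (1 - p) ^ card (T i)) + (\<Sum>i\<in>F'. \<Sum>j\<in>F'. jv (1 - p) T i j))"
    by (rule janson_basic[OF finE p fF']) (use TE F' in auto)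
  also have "\<dots> \<le> exp (- (t * \<mu> - t\<^sup>2 * D))"
    using F' by simp
  finally show ?thesis .
qed

lemma janson_cor:
  fixes E :: "'a set" and T :: "'i \<Rightarrow> 'a set"
  assumes finE: "finite E" and p: "0 \<le> p" "p \<le> 1"
  assumes F: "finite F" and TE: "\<And>i. i \<in> F \<Longrightarrow> T i \<subseteq> E"
  defines "\<mu> \<equiv> (\<Sum>i\<in>F. (1 - p) ^ card (T i))"
  defines "D \<equiv> (\<Sum>i\<in>F. \<Sum>j\<in>F. jv (1 - p) T i j)"
  assumes X: "0 \<le> X" "2 * X \<le> \<mu>" "4 * D * X \<le> \<mu>\<^sup>2"
  shows "measure_pmf.prob (Pi_pmf E False (\<lambda>_. bernoulli_pmf p)) {G. \<forall>i\<in>F. \<exists>e\<in>T i. G e} \<le> exp (- X)"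
proof -
  have D0: "0 \<le> D" unfolding D_def using p by (intro sum_nonneg jv_nonneg) auto
  show ?thesis
  proof (cases "2 * D \<le> \<mu>")
    case True
    have "measure_pmf.prob (Pi_pmf E False (\<lambda>_. bernoulli_pmf p)) {G. \<forall>i\<in>F. \<exists>e\<in>T i. G e} \<le> exp (- (1 * \<mu> - 1\<^sup>2 * D))"
      unfolding \<mu>_def D_def by (rule janson_ext[OF finE p F TE]) auto
    also have "\<dots> \<le> exp (- X)" using True X by simp
    finally show ?thesis .
  next
    case False
    hence Dp: "D > 0" "\<mu> < 2 * D" using D0 X by auto
    define t where "t = \<mu> / (2 * D)"
    have mu0: "0 \<le> \<mu>" using X by simp
    have t: "0 \<le> t" "t \<le> 1" using Dp mu0 by (auto simp: t_def field_simps)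
    have "measure_pmf.prob (Pi_pmf E False (\<lambda>_. bernoulli_pmf p)) {G. \<forall>i\<in>F. \<exists>e\<in>T i. G e} \<le> exp (- (t * \<mu> - t\<^sup>2 * D))"
      unfolding \<mu>_def D_def by (rule janson_ext[OF finE p F TE]) (use t in \<open>auto simp: \<mu>_def D_def\<close>)
    also have "t * \<mu> - t\<^sup>2 * D = \<mu>\<^sup>2 / (4 * D)"
      using Dp by (simp add: t_def field_simps power2_eq_square)
    also have "X \<le> \<mu>\<^sup>2 / (4 * D)" using X Dp by (simp add: field_simps)
    hence "exp (- (\<mu>\<^sup>2 / (4 * D))) \<le> exp (- X)" by simp
    finally show ?thesis .
  qed
qed

definition edg :: "nat set \<Rightarrow> nat set set" where
  "edg I = {e. e \<subseteq> I \<and> card e = 2}"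

definition indepset :: "(nat set \<Rightarrow> bool) \<Rightarrow> nat set \<Rightarrow> bool" where
  "indepset G L \<longleftrightarrow> (\<forall>x\<in>L. \<forall>y\<in>L. \<not> adj G x y)"

lemma finite_pairs: "finite (pairs n)"
proof -
  have "pairs n \<subseteq> Pow {1..n}" by (auto simp: pairs_def)
  thus ?thesis by (rule finite_subset) simp
qed

lemma edg_sub_pairs: "I \<subseteq> {1..n} \<Longrightarrow> edg I \<subseteq> pairs n"
proof
  fix e assume I: "I \<subseteq> {1..n}" and e: "e \<in> edg I"
  then obtain u v where uv: "e = {u, v}" "u \<noteq> v" using e by (auto simp: edg_def card_2_iff)
  have "u \<in> {1..n}" "v \<in> {1..n}" using uv e I by (auto simp: edg_def)
  thus "e \<in> pairs n" unfolding pairs_def using uv by blast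
qed

lemma card_edg: "finite I \<Longrightarrow> card (edg I) = card I choose 2"
  unfolding edg_def by (rule n_subsets)

lemma edg_Int: "edg I \<inter> edg J = edg (I \<inter> J)"
  by (auto simp: edg_def)

lemma edg_empty_iff: "finite A \<Longrightarrow> edg A = {} \<longleftrightarrow> card A < 2"
proof
  assume fA: "finite A" and "edg A = {}"
  show "card A < 2"
  proof (rule ccontr)
    assume "\<not> card A < 2"
    then obtain B where "B \<subseteq> A" "card B = 2" using obtain_subset_with_card_n[of 2 A] by auto
    thus False using \<open>edg A = {}\<close> by (auto simp: edg_def)
  qed
next
  assume fA: "finite A" and "card A < 2"
  show "edg A = {}"
  proof (rule ccontr)
    assume "edg A \<noteq> {}"
    then obtain e where "e \<subseteq> A" "card e = 2" by (auto simp: edg_def)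
    hence "card e \<le> card A" using card_mono[OF fA] by blast
    thus False using \<open>card e = 2\<close> \<open>card A < 2\<close> by simp
  qed
qed

lemma count_overlap:
  assumes fS: "finite S" and I: "I \<subseteq> S" "card I = K"
  shows "card {J. J \<subseteq> S \<and> card J = K \<and> card (I \<inter> J) = i} \<le> (K choose i) * ((card S - K) choose (K - i))"
proof -
  define A where "A = {J. J \<subseteq> S \<and> card J = K \<and> card (I \<inter> J) = i}"
  define h where "h = (\<lambda>J. (I \<inter> J, J - I))"
  have fI: "finite I" using fS I finite_subset by blast
  have inj: "inj_on h A"
  proof (rule inj_onI)
    fix J1 J2 assume "J1 \<in> A" "J2 \<in> A" "h J1 = h J2"
    hence "I \<inter> J1 = I \<inter> J2" "J1 - I = J2 - I" by (auto simp: h_def)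
    thus "J1 = J2" by blast
  qed
  have img: "h ` A \<subseteq> {B. B \<subseteq> I \<and> card B = i} \<times> {B. B \<subseteq> S - I \<and> card B = K - i}"
  proof
    fix x assume "x \<in> h ` A"
    then obtain J where J: "J \<subseteq> S" "card J = K" "card (I \<inter> J) = i" "x = h J" by (auto simp: A_def)
    have fJ: "finite J" using J fS finite_subset by blast
    have "card (J - I) = card J - card (J \<inter> I)" using fJ by (simp add: card_Diff_subset_Int)
    hence "card (J - I) = K - i" using J by (simp add: Int_commute)
    thus "x \<in> {B. B \<subseteq> I \<and> card B = i} \<times> {B. B \<subseteq> S - I \<and> card B = K - i}"
      using J by (auto simp: h_def)
  qed
  have "card A = card (h ` A)" using inj by (simp add: card_image)
  also have "\<dots> \<le> card ({B. B \<subseteq> I \<and> card B = i} \<times> {B. B \<subseteq> S - I \<and> card B = K - i})"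
    using img fI fS by (intro card_mono) (auto intro: finite_cartesian_product)
  also have "\<dots> = (K choose i) * ((card S - K) choose (K - i))"
    using fI fS I by (simp add: card_cartesian_product n_subsets card_Diff_subset)
  finally show ?thesis by (simp add: A_def)
qed


lemma overlap_sum_bound:
  assumes fS: "finite S" and I: "I \<subseteq> S" "card I = K" and q: "0 \<le> q"
  shows "(\<Sum>J\<in>{J. J \<subseteq> S \<and> card J = K}. jv q edg I J) \<le>
         (\<Sum>i\<in>{2..<K}. real ((K choose i) * ((card S - K) choose (K - i))) * q ^ (2 * (K choose 2) - (i choose 2)))"
proof -
  define F where "F = {J. J \<subseteq> S \<and> card J = K}"
  have fF: "finite F" using fS by (simp add: F_def)
  have fI: "finite I" using fS I finite_subset by blast
  define val where "val = (\<lambda>i::nat. if 2 \<le> i \<and> i < K then q ^ (2 * (K choose 2) - (i choose 2)) else 0)"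
  have jv_eq: "jv q edg I J = val (card (I \<inter> J))" if J: "J \<in> F" for J
  proof -
    have fJ: "finite J" using J fS by (auto simp: F_def intro: finite_subset)
    have cJ: "card J = K" using J by (simp add: F_def)
    consider "card (I \<inter> J) < 2" | "card (I \<inter> J) = K" | "2 \<le> card (I \<inter> J)" "card (I \<inter> J) < K"
    proof -
      have "card (I \<inter> J) \<le> K" using card_mono[OF fI, of "I \<inter> J"] I by auto
      thus "(card (I \<inter> J) < 2 \<Longrightarrow> thesis) \<Longrightarrow> (card (I \<inter> J) = K \<Longrightarrow> thesis) \<Longrightarrow> (2 \<le> card (I \<inter> J) \<Longrightarrow> card (I \<inter> J) < K \<Longrightarrow> thesis) \<Longrightarrow> thesis"
        by linarith
    qed
    thus ?thesis
    proof cases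
      case 1
      hence "edg I \<inter> edg J = {}" using edg_empty_iff[of "I \<inter> J"] fI by (simp add: edg_Int)
      thus ?thesis using 1 by (simp add: jv_def val_def)
    next
      case 2
      have "I \<inter> J = I" using card_subset_eq[OF fI, of "I \<inter> J"] 2 I by auto
      hence "I \<subseteq> J" by blast
      hence "I = J" using card_subset_eq[OF fJ, of I] cJ I by auto
      thus ?thesis using 2 by (simp add: jv_def val_def)
    next
      case 3
      have ne: "edg I \<inter> edg J \<noteq> {}" using edg_empty_iff[of "I \<inter> J"] fI 3 by (simp add: edg_Int)
      have IJ: "I \<noteq> J" using 3 I by auto
      have "card (edg I) + card (edg J) = card (edg I \<union> edg J) + card (edg (I \<inter> J))"
      proof -
        have "finite (edg I)" "finite (edg J)" using fI fJ by (auto simp: edg_def)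
        thus ?thesis using card_Un_Int[of "edg I" "edg J"] by (simp add: edg_Int)
      qed
      hence "card (edg I \<union> edg J) = 2 * (K choose 2) - (card (I \<inter> J) choose 2)"
        using fI fJ cJ I by (simp add: card_edg)
      thus ?thesis using ne IJ 3 by (simp add: jv_def val_def)
    qed
  qed
  have "(\<Sum>J\<in>F. jv q edg I J) = (\<Sum>J\<in>F. val (card (I \<inter> J)))"
    by (intro sum.cong refl jv_eq)
  also have "\<dots> = (\<Sum>i\<in>{0..K}. \<Sum>J\<in>{J\<in>F. card (I \<inter> J) = i}. val (card (I \<inter> J)))"
  proof (rule sum.group[symmetric, OF fF])
    show "finite {0..K}" by simp
    show "(\<lambda>J. card (I \<inter> J)) ` F \<subseteq> {0..K}"
      using I fI by (auto intro!: card_mono simp: F_def)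
  qed
  also have "\<dots> = (\<Sum>i\<in>{0..K}. real (card {J\<in>F. card (I \<inter> J) = i}) * val i)"
    by (intro sum.cong refl) simp
  also have "\<dots> \<le> (\<Sum>i\<in>{0..K}. real ((K choose i) * ((card S - K) choose (K - i))) * val i)"
  proof (rule sum_mono)
    fix i assume "i \<in> {0..K}"
    have "card {J\<in>F. card (I \<inter> J) = i} \<le> (K choose i) * ((card S - K) choose (K - i))"
      using count_overlap[OF fS I, of i] by (simp add: F_def conj_assoc)
    hence "real (card {J\<in>F. card (I \<inter> J) = i}) \<le> real ((K choose i) * ((card S - K) choose (K - i)))"
      by (simp only: of_nat_le_iff)
    moreover have "0 \<le> val i" using q by (simp add: val_def)
    ultimately show "real (card {J\<in>F. card (I \<inter> J) = i}) * val i \<le> real ((K choose i) * ((card S - K) choose (K - i))) * val i"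
      by (intro mult_right_mono) simp_all
  qed
  also have "\<dots> = (\<Sum>i\<in>{2..<K}. real ((K choose i) * ((card S - K) choose (K - i))) * q ^ (2 * (K choose 2) - (i choose 2)))"
  proof -
    have "(\<Sum>i\<in>{0..K}. real ((K choose i) * ((card S - K) choose (K - i))) * val i) =
          (\<Sum>i\<in>{2..<K}. real ((K choose i) * ((card S - K) choose (K - i))) * val i)"
      by (intro sum.mono_neutral_right) (auto simp: val_def)
    also have "\<dots> = (\<Sum>i\<in>{2..<K}. real ((K choose i) * ((card S - K) choose (K - i))) * q ^ (2 * (K choose 2) - (i choose 2)))"
      by (intro sum.cong refl) (auto simp: val_def)
    finally show ?thesis .
  qed
  finally show ?thesis by (simp add: F_def)
qed

lemma no_indep_bound:
  fixes K :: nat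
  assumes p: "0 \<le> p" "p \<le> 1" and S: "S \<subseteq> {1..n}" "card S = s"
  defines "q \<equiv> 1 - p"
  defines "\<mu> \<equiv> real (s choose K) * q ^ (K choose 2)"
  defines "D \<equiv> real (s choose K) * (\<Sum>i\<in>{2..<K}. real ((K choose i) * ((s - K) choose (K - i))) * q ^ (2 * (K choose 2) - (i choose 2)))"
  assumes X: "0 \<le> X" "2 * X \<le> \<mu>" "4 * D * X \<le> \<mu>\<^sup>2"
  shows "measure_pmf.prob (Gnp n p) {G. \<not> (\<exists>L\<subseteq>S. card L = K \<and> indepset G L)} \<le> exp (- X)"
proof -
  define F where "F = {J. J \<subseteq> S \<and> card J = K}"
  have fS: "finite S" using S finite_subset by blast
  have fF: "finite F" using fS by (simp add: F_def)
  have q0: "0 \<le> q" using p by (simp add: q_def)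
  have TE: "edg I \<subseteq> pairs n" if "I \<in> F" for I
    using that S by (intro edg_sub_pairs) (auto simp: F_def)
  have sub: "{G. \<not> (\<exists>L\<subseteq>S. card L = K \<and> indepset G L)} \<subseteq> {G. \<forall>I\<in>F. \<exists>e\<in>edg I. G e}"
  proof safe
    fix G I assume nI: "\<not> (\<exists>L\<subseteq>S. card L = K \<and> indepset G L)" and I: "I \<in> F"
    hence "\<not> indepset G I" by (auto simp: F_def)
    then obtain x y where "x \<in> I" "y \<in> I" "adj G x y" by (auto simp: indepset_def)
    hence "{x, y} \<in> edg I" "G {x, y}" by (auto simp: adj_def edg_def)
    thus "\<exists>e\<in>edg I. G e" by blast
  qed
  have muJ: "(\<Sum>I\<in>F. (1 - p) ^ card (edg I)) = \<mu>"
  proof -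
    have "(\<Sum>I\<in>F. (1 - p) ^ card (edg I)) = (\<Sum>I\<in>F. q ^ (K choose 2))"
    proof (intro sum.cong refl)
      fix I assume "I \<in> F"
      hence "finite I" "card I = K" using fS by (auto simp: F_def intro: finite_subset)
      thus "(1 - p) ^ card (edg I) = q ^ (K choose 2)" by (simp add: card_edg q_def)
    qed
    also have "\<dots> = \<mu>" using fS S by (simp add: F_def \<mu>_def n_subsets)
    finally show ?thesis .
  qed
  have DJ: "(\<Sum>I\<in>F. \<Sum>J\<in>F. jv (1 - p) edg I J) \<le> D"
  proof -
    have "(\<Sum>I\<in>F. \<Sum>J\<in>F. jv (1 - p) edg I J) \<le> (\<Sum>I\<in>F. (\<Sum>i\<in>{2..<K}. real ((K choose i) * ((s - K) choose (K - i))) * q ^ (2 * (K choose 2) - (i choose 2))))"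
      using overlap_sum_bound[OF fS _ _ q0] S by (intro sum_mono) (auto simp: F_def q_def)
    also have "\<dots> = D" using fS S by (simp add: F_def D_def n_subsets)
    finally show ?thesis .
  qed
  have "measure_pmf.prob (Gnp n p) {G. \<not> (\<exists>L\<subseteq>S. card L = K \<and> indepset G L)} \<le>
        measure_pmf.prob (Pi_pmf (pairs n) False (\<lambda>_. bernoulli_pmf p)) {G. \<forall>I\<in>F. \<exists>e\<in>edg I. G e}"
    unfolding Gnp_def by (rule measure_pmf.finite_measure_mono[OF sub]) simp
  also have "\<dots> \<le> exp (- X)"
  proof (rule janson_cor[OF finite_pairs p fF TE])
    show "0 \<le> X" "2 * X \<le> (\<Sum>I\<in>F. (1 - p) ^ card (edg I))" using X muJ by auto
    have "4 * (\<Sum>I\<in>F. \<Sum>J\<in>F. jv (1 - p) edg I J) * X \<le> 4 * D * X"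
      using DJ X by (intro mult_right_mono) auto
    thus "4 * (\<Sum>I\<in>F. \<Sum>J\<in>F. jv (1 - p) edg I J) * X \<le> (\<Sum>I\<in>F. (1 - p) ^ card (edg I))\<^sup>2"
      using X muJ by simp
  qed auto
  finally show ?thesis .
qed

lemma binomial_le_gnp:
  assumes p: "0 \<le> p" "p \<le> 1" and P: "P \<subseteq> pairs n"
  shows "map_pmf (\<lambda>G. card {e\<in>P. G e}) (Gnp n p) = binomial_pmf (card P) p"
proof -
  have fP: "finite P" using P finite_pairs finite_subset by blast
  have "binomial_pmf (card P) p = map_pmf (\<lambda>f. card {x\<in>P. f x}) (Pi_pmf P False (\<lambda>_. bernoulli_pmf p))"
    by (rule binomial_pmf_altdef') (use fP p in auto)
  also have "Pi_pmf P False (\<lambda>_. bernoulli_pmf p) = map_pmf (\<lambda>f x. if x \<in> P then f x else False) (Gnp n p)"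
    unfolding Gnp_def by (rule Pi_pmf_subset[OF finite_pairs P])
  also have "map_pmf (\<lambda>f. card {x\<in>P. f x}) \<dots> = map_pmf (\<lambda>G. card {e\<in>P. G e}) (Gnp n p)"
  proof -
    have "\<And>x. {xa. (xa \<in> P \<longrightarrow> x xa) \<and> xa \<in> P} = {e\<in>P. x e}" by blast
    thus ?thesis by (simp add: map_pmf_comp)
  qed
  finally show ?thesis by simp
qed

lemma P2_bound:
  fixes A B :: "nat set" and s m :: nat and p :: real
  assumes p: "0 < p" "p < 1" and A: "A \<subseteq> {1..n}" "card A = m" and B: "B \<subseteq> {1..n}" "card B = m"
    and AB: "A \<inter> B = {}" and m: "m > 0" and s: "2 * real s \<le> p * m"
  shows "measure_pmf.prob (Gnp n p) {G. \<forall>c\<in>A. card (nbhd n G c \<inter> B) < s} \<le> exp (- (p\<^sup>2 * m\<^sup>2 / 2))"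
proof -
  define P where "P = (\<lambda>(a,b). {a, b :: nat}) ` (A \<times> B)"
  have fA: "finite A" and fB: "finite B" using A B finite_subset by auto
  have inj: "inj_on (\<lambda>(a,b). {a, b :: nat}) (A \<times> B)"
  proof (rule inj_onI, clarify)
    fix a b a' b' assume "a \<in> A" "b \<in> B" "a' \<in> A" "b' \<in> B" "{a, b} = {a', b'}"
    thus "a = a' \<and> b = b'" using AB by (metis disjoint_iff doubleton_eq_iff)
  qed
  have cP: "card P = m * m" using inj A B by (simp add: P_def card_image card_cartesian_product)
  have PP: "P \<subseteq> pairs n"
  proof
    fix e assume "e \<in> P"
    then obtain a b where ab: "a \<in> A" "b \<in> B" "e = {a, b}" by (auto simp: P_def)
    hence "a \<noteq> b" "a \<in> {1..n}" "b \<in> {1..n}" using AB A B by auto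
    thus "e \<in> pairs n" unfolding pairs_def using ab by blast
  qed
  have sub: "{G. \<forall>c\<in>A. card (nbhd n G c \<inter> B) < s} \<subseteq> {G. real (card {e\<in>P. G e}) \<le> real (card P) * p - p * m\<^sup>2 / 2}"
  proof safe
    fix G assume h: "\<forall>c\<in>A. card (nbhd n G c \<inter> B) < s"
    have eq: "{e\<in>P. G e} = (\<Union>c\<in>A. (\<lambda>b. {c, b}) ` (nbhd n G c \<inter> B))"
    proof safe
      fix e assume "e \<in> P" "G e"
      then obtain a b where ab: "a \<in> A" "b \<in> B" "e = {a, b}" by (auto simp: P_def)
      have "a \<noteq> b" using ab AB by auto
      hence "b \<in> nbhd n G a" using ab B \<open>G e\<close> by (auto simp: nbhd_def adj_def)
      thus "e \<in> (\<Union>c\<in>A. (\<lambda>b. {c, b}) ` (nbhd n G c \<inter> B))" using ab by blast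
    next
      fix c b assume "c \<in> A" "b \<in> nbhd n G c" "b \<in> B"
      thus "{c, b} \<in> P" "G {c, b}" by (auto simp: P_def nbhd_def adj_def)
    qed
    have "card {e\<in>P. G e} \<le> (\<Sum>c\<in>A. card ((\<lambda>b. {c, b}) ` (nbhd n G c \<inter> B)))"
      unfolding eq by (rule card_UN_le[OF fA])
    also have "\<dots> \<le> (\<Sum>c\<in>A. s)"
    proof (rule sum_mono)
      fix c assume "c \<in> A"
      have "card ((\<lambda>b. {c, b}) ` (nbhd n G c \<inter> B)) \<le> card (nbhd n G c \<inter> B)" by (rule card_image_le) (use fB in simp)
      thus "card ((\<lambda>b. {c, b}) ` (nbhd n G c \<inter> B)) \<le> s" using h \<open>c \<in> A\<close> by fastforce
    qed
    also have "\<dots> = m * s" using A by simp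
    finally have "real (card {e\<in>P. G e}) \<le> real m * real s" by (simp flip: of_nat_mult)
    also have "\<dots> \<le> real m * (p * m / 2)" using s by (intro mult_left_mono) auto
    also have "\<dots> = real (card P) * p - p * m\<^sup>2 / 2" using cP by (simp add: power2_eq_square field_simps)
    finally show "real (card {e\<in>P. G e}) \<le> real (card P) * p - p * m\<^sup>2 / 2" .
  qed
  have "measure_pmf.prob (Gnp n p) {G. \<forall>c\<in>A. card (nbhd n G c \<inter> B) < s} \<le>
        measure_pmf.prob (Gnp n p) ((\<lambda>G. card {e\<in>P. G e}) -` {x. real x \<le> real (card P) * p - p * m\<^sup>2 / 2})"
    by (rule measure_pmf.finite_measure_mono) (use sub in auto)
  also have "\<dots> = measure_pmf.prob (binomial_pmf (card P) p) {x. real x \<le> real (card P) * p - p * m\<^sup>2 / 2}"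
  proof -
    have "measure_pmf.prob (Gnp n p) ((\<lambda>G. card {e\<in>P. G e}) -` {x. real x \<le> real (card P) * p - p * m\<^sup>2 / 2}) =
          measure_pmf.prob (map_pmf (\<lambda>G. card {e\<in>P. G e}) (Gnp n p)) {x. real x \<le> real (card P) * p - p * m\<^sup>2 / 2}"
      by (rule measure_map_pmf[symmetric])
    thus ?thesis using binomial_le_gnp[OF _ _ PP, of p] p by simp
  qed
  also have "\<dots> \<le> exp (-2 * (p * m\<^sup>2 / 2)\<^sup>2 / card P)"
  proof (rule binomial_distribution.prob_le)
    show "binomial_distribution p" by unfold_locales (use p in auto)
    show "0 < card P" using cP m by simp
    show "0 \<le> p * m\<^sup>2 / 2" using p by simp
  qed
  also have "-2 * (p * m\<^sup>2 / 2)\<^sup>2 / card P = - (p\<^sup>2 * m\<^sup>2 / 2)"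
    using cP m by (simp add: power2_eq_square field_simps)
  finally show ?thesis .
qed

lemma real_choose_two: "real (n choose 2) = real n * (real n - 1) / 2"
proof -
  have "even (n * (n - 1))" by (cases "even n") auto
  hence "real (n * (n - 1) div 2) = real (n * (n - 1)) / 2" by (simp add: real_of_nat_div)
  thus ?thesis by (cases n) (auto simp: choose_two algebra_simps)
qed

lemma fact_ge_shift: "real (fact a) * (real a + 1) ^ k \<le> real (fact (a + k))"
proof (induction k)
  case 0 then show ?case by simp
next
  case (Suc k)
  have "real (fact a) * (real a + 1) ^ Suc k = (real (fact a) * (real a + 1) ^ k) * (real a + 1)" by simp
  also have "\<dots> \<le> real (fact (a + k)) * (real (a + k) + 1)"
    using Suc by (intro mult_mono) auto
  also have "\<dots> = real (fact (a + Suc k))" by (simp add: algebra_simps)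
  finally show ?case .
qed

lemma fact_le_shift: "real (fact (a + k)) \<le> real (fact a) * (real (a + k)) ^ k"
proof (induction k)
  case 0 then show ?case by simp
next
  case (Suc k)
  have "real (fact (a + Suc k)) = real (a + Suc k) * real (fact (a + k))" by (simp add: algebra_simps)
  also have "\<dots> \<le> real (a + Suc k) * (real (fact a) * (real (a + k)) ^ k)"
    using Suc by (intro mult_left_mono) auto
  also have "\<dots> \<le> real (a + Suc k) * (real (fact a) * (real (a + Suc k)) ^ k)"
    by (intro mult_left_mono power_mono) auto
  also have "\<dots> = real (fact a) * (real (a + Suc k)) ^ Suc k" by (simp add: algebra_simps)
  finally show ?case .
qed

lemma choose_fact_le: "real (n choose k) * real (fact k) \<le> real n ^ k"
proof (cases "k \<le> n")
  case True
  have e: "real (fact k) * real (fact (n - k)) * real (n choose k) = real (fact n)"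
    using binomial_fact_lemma[OF True] by (metis of_nat_mult)
  have "real (fact n) \<le> real (fact (n - k)) * real n ^ k"
    using fact_le_shift[of "n - k" k] True by simp
  hence "real (fact (n - k)) * (real (n choose k) * real (fact k)) \<le> real (fact (n - k)) * real n ^ k"
    using e by (simp add: algebra_simps)
  thus ?thesis by (simp add: mult_le_cancel_left_pos)
next
  case False thus ?thesis by (simp add: binomial_eq_0)
qed

lemma choose_le_pow_real: "real (n choose k) \<le> real n ^ k"
proof -
  have "real (n choose k) \<le> real (n choose k) * real (fact k)"
    by (intro mult_le_cancel_left1[THEN iffD2] disjI1 conjI) (auto simp: fact_ge_1)
  thus ?thesis using choose_fact_le[of n k] by linarith
qed

lemma choose_fact_ge:
  assumes "K \<le> s"
  shows "(real s - real K) ^ K \<le> real (s choose K) * real (fact K)"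
proof -
  have e: "real (fact K) * real (fact (s - K)) * real (s choose K) = real (fact s)"
    using binomial_fact_lemma[OF assms] by (metis of_nat_mult)
  have "real (fact (s - K)) * (real (s - K) + 1) ^ K \<le> real (fact s)"
    using fact_ge_shift[of "s - K" K] assms by simp
  moreover have "(real s - real K) ^ K \<le> (real (s - K) + 1) ^ K"
    using assms by (intro power_mono) (auto simp: of_nat_diff)
  ultimately have "real (fact (s - K)) * (real s - real K) ^ K \<le> real (fact (s - K)) * (real (s choose K) * real (fact K))"
    using e by (smt (verit, ccfv_SIG) mult.commute mult.left_commute mult_left_mono of_nat_0_le_iff)
  thus ?thesis by (simp add: mult_le_cancel_left_pos)
qed

lemma C1:
  assumes "K \<le> s" "i \<le> K"
  shows "real (K choose i) * real ((s - K) choose (K - i)) * (real s - real K) ^ i \<le> real (s choose K) * real K ^ (2 * i)"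
proof -
  have fpos: "0 < real (fact (K - i))" by simp
  have a1: "real ((s - K) choose (K - i)) * real (fact (K - i)) \<le> (real s - real K) ^ (K - i)"
    using choose_fact_le[of "s - K" "K - i"] assms by (simp add: of_nat_diff)
  have a2: "real (fact K) \<le> real (fact (K - i)) * real K ^ i"
    using fact_le_shift[of "K - i" i] assms by simp
  have "real (K choose i) * real ((s - K) choose (K - i)) * (real s - real K) ^ i * real (fact (K - i))
        = real (K choose i) * (real ((s - K) choose (K - i)) * real (fact (K - i))) * (real s - real K) ^ i"
    by (simp add: algebra_simps)
  also have "\<dots> \<le> real K ^ i * (real s - real K) ^ (K - i) * (real s - real K) ^ i"
    using assms a1 by (intro mult_mono choose_le_pow_real) auto
  also have "\<dots> = real K ^ i * (real s - real K) ^ K"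
    using assms by (simp add: mult.assoc power_add[symmetric])
  also have "\<dots> \<le> real K ^ i * (real (s choose K) * real (fact K))"
    using choose_fact_ge[OF assms(1)] by (intro mult_left_mono) auto
  also have "\<dots> \<le> real K ^ i * (real (s choose K) * (real (fact (K - i)) * real K ^ i))"
    using a2 by (intro mult_left_mono) auto
  also have "\<dots> = real (s choose K) * (real K ^ i * real K ^ i) * real (fact (K - i))"
    by (simp add: algebra_simps)
  also have "real K ^ i * real K ^ i = real K ^ (2 * i)"
    by (simp add: power_add[symmetric] mult_2)
  finally show ?thesis using fpos by (simp add: mult_le_cancel_right_pos)
qed


lemma u_small:
  fixes q :: real
  assumes q: "0 < q" "q \<le> 1" and i: "i \<le> K" and Ks: "K < s"
  shows "real (K choose i) * real ((s - K) choose (K - i)) * q ^ ((K choose 2) - (i choose 2))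
         \<le> real (s choose K) * q ^ (K choose 2) * ((real K ^ 2 / (real s - real K)) ^ i * (1 / q) ^ (i choose 2))"
proof -
  have ci: "(i choose 2) \<le> (K choose 2)" using i by (rule binomial_right_mono)
  have qe: "q ^ ((K choose 2) - (i choose 2)) = q ^ (K choose 2) * (1 / q) ^ (i choose 2)"
  proof -
    have "q ^ ((K choose 2) - (i choose 2)) * q ^ (i choose 2) = q ^ (K choose 2)"
      using ci by (simp add: power_add[symmetric])
    thus ?thesis using q by (simp add: field_simps power_one_over)
  qed
  have sK: "0 < real s - real K" using Ks by simp
  have c1: "real (K choose i) * real ((s - K) choose (K - i)) \<le> real (s choose K) * (real K ^ 2 / (real s - real K)) ^ i"
  proof -
    have "real (K choose i) * real ((s - K) choose (K - i)) * (real s - real K) ^ i \<le> real (s choose K) * real K ^ (2 * i)"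
      using C1[of K s i] Ks i by simp
    hence "real (K choose i) * real ((s - K) choose (K - i)) \<le> real (s choose K) * real K ^ (2 * i) / (real s - real K) ^ i"
      using sK by (simp add: field_simps)
    also have "\<dots> = real (s choose K) * (real K ^ 2 / (real s - real K)) ^ i"
      by (simp add: power_divide power_mult)
    finally show ?thesis .
  qed
  have "real (K choose i) * real ((s - K) choose (K - i)) * q ^ ((K choose 2) - (i choose 2)) =
        (real (K choose i) * real ((s - K) choose (K - i))) * (q ^ (K choose 2) * (1 / q) ^ (i choose 2))"
    by (simp add: qe)
  also have "\<dots> \<le> (real (s choose K) * (real K ^ 2 / (real s - real K)) ^ i) * (q ^ (K choose 2) * (1 / q) ^ (i choose 2))"
    using q by (intro mult_right_mono c1) auto
  finally show ?thesis by (simp add: algebra_simps)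
qed

lemma u_large:
  fixes q :: real
  assumes q: "0 < q" "q \<le> 1" and i: "i \<le> K"
  shows "real (K choose i) * real ((s - K) choose (K - i)) * q ^ ((K choose 2) - (i choose 2))
         \<le> (real K * real s * q powr ((real K + real i - 1) / 2)) ^ (K - i)"
proof -
  have ci: "(i choose 2) \<le> (K choose 2)" using i by (rule binomial_right_mono)
  have "q ^ ((K choose 2) - (i choose 2)) = q powr (real (K choose 2) - real (i choose 2))"
    using q ci by (simp add: powr_realpow[symmetric] of_nat_diff)
  also have "real (K choose 2) - real (i choose 2) = real (K - i) * ((real K + real i - 1) / 2)"
    using i by (simp add: real_choose_two of_nat_diff field_simps)
  also have "q powr (real (K - i) * ((real K + real i - 1) / 2)) = (q powr ((real K + real i - 1) / 2)) ^ (K - i)"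
    using q by (simp add: powr_power)
  finally have qe: "q ^ ((K choose 2) - (i choose 2)) = (q powr ((real K + real i - 1) / 2)) ^ (K - i)" .
  have c1: "real (K choose i) \<le> real K ^ (K - i)"
    using binomial_symmetric[OF i] choose_le_pow_real[of K "K - i"] by simp
  have c2: "real ((s - K) choose (K - i)) \<le> real s ^ (K - i)"
  proof -
    have "real (s - K) ^ (K - i) \<le> real s ^ (K - i)" by (intro power_mono) auto
    thus ?thesis using choose_le_pow_real[of "s - K" "K - i"] by linarith
  qed
  have "real (K choose i) * real ((s - K) choose (K - i)) * q ^ ((K choose 2) - (i choose 2))
        \<le> real K ^ (K - i) * real s ^ (K - i) * (q powr ((real K + real i - 1) / 2)) ^ (K - i)"
    unfolding qe by (intro mult_mono c1 c2) auto
  also have "\<dots> = (real K * real s * q powr ((real K + real i - 1) / 2)) ^ (K - i)"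
    by (simp add: power_mult_distrib)
  finally show ?thesis .
qed

lemma small_term:
  fixes y b :: real
  assumes i: "2 \<le> i" "i \<le> i1" and y: "0 \<le> y" and b: "1 \<le> b" and h: "y * b powr ((real i1 + 1) / 2) \<le> 1"
  shows "y ^ i * b ^ (i choose 2) \<le> y\<^sup>2 * b"
proof -
  have bp: "0 < b" using b by simp
  have "b ^ (i choose 2) = b powr (real (i choose 2))" using bp by (simp add: powr_realpow)
  also have "real (i choose 2) = 1 + real (i - 2) * ((real i + 1) / 2)"
    using i by (simp add: real_choose_two of_nat_diff field_simps)
  also have "b powr (1 + real (i - 2) * ((real i + 1) / 2)) = b * (b powr ((real i + 1) / 2)) ^ (i - 2)"
    using bp by (simp add: powr_add powr_power)
  finally have be: "b ^ (i choose 2) = b * (b powr ((real i + 1) / 2)) ^ (i - 2)" .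
  have ye: "y ^ i = y\<^sup>2 * y ^ (i - 2)"
  proof -
    have "i = 2 + (i - 2)" using i by simp
    hence "y ^ i = y ^ (2 + (i - 2))" by simp
    thus ?thesis by (simp only: power_add)
  qed
  have "y * b powr ((real i + 1) / 2) \<le> y * b powr ((real i1 + 1) / 2)"
    using i y b by (intro mult_left_mono powr_mono) auto
  hence le1: "y * b powr ((real i + 1) / 2) \<le> 1" using h by simp
  have "y ^ i * b ^ (i choose 2) = y\<^sup>2 * b * (y * b powr ((real i + 1) / 2)) ^ (i - 2)"
    by (simp add: be ye power_mult_distrib algebra_simps)
  also have "\<dots> \<le> y\<^sup>2 * b * 1"
    using le1 y bp by (intro mult_left_mono power_le_one) auto
  finally show ?thesis by simp
qed

lemma sum_u_bound:
  fixes q :: real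
  assumes q: "0 < q" "q \<le> 1" and Ks: "K < s"
  defines "y \<equiv> real K ^ 2 / (real s - real K)"
  defines "\<mu> \<equiv> real (s choose K) * q ^ (K choose 2)"
  assumes h4: "y * (1 / q) powr ((real i1 + 1) / 2) \<le> 1"
    and h5: "real K * real s * q powr ((real K + real i1) / 2) \<le> 1"
  shows "(\<Sum>i\<in>{2..<K}. real (K choose i) * real ((s - K) choose (K - i)) * q ^ ((K choose 2) - (i choose 2)))
          \<le> real K * (\<mu> * y\<^sup>2 * (1 / q) + 1)"
proof -
  have y0: "0 \<le> y" using Ks by (simp add: y_def)
  have mu0: "0 \<le> \<mu>" using q by (simp add: \<mu>_def)
  have trm: "real (K choose i) * real ((s - K) choose (K - i)) * q ^ ((K choose 2) - (i choose 2)) \<le> \<mu> * y\<^sup>2 * (1 / q) + 1"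
    if i: "i \<in> {2..<K}" for i
  proof (cases "i \<le> i1")
    case True
    have "real (K choose i) * real ((s - K) choose (K - i)) * q ^ ((K choose 2) - (i choose 2)) \<le> \<mu> * (y ^ i * (1 / q) ^ (i choose 2))"
      using u_small[OF q _ Ks, of i] i by (simp add: \<mu>_def y_def)
    also have "\<dots> \<le> \<mu> * (y\<^sup>2 * (1 / q))"
      using i True y0 q h4 by (intro mult_left_mono[OF small_term mu0]) auto
    finally show ?thesis using mu0 by simp
  next
    case False
    have "real (K choose i) * real ((s - K) choose (K - i)) * q ^ ((K choose 2) - (i choose 2)) \<le> (real K * real s * q powr ((real K + real i - 1) / 2)) ^ (K - i)"
      using u_large[OF q, of i K s] i by simp
    also have "\<dots> \<le> 1"
    proof (rule power_le_one)
      show "0 \<le> real K * real s * q powr ((real K + real i - 1) / 2)" by simp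
      have "q powr ((real K + real i - 1) / 2) \<le> q powr ((real K + real i1) / 2)"
        using False q by (intro powr_mono') auto
      hence "real K * real s * q powr ((real K + real i - 1) / 2) \<le> real K * real s * q powr ((real K + real i1) / 2)"
        by (intro mult_left_mono) auto
      thus "real K * real s * q powr ((real K + real i - 1) / 2) \<le> 1" using h5 by simp
    qed
    finally show ?thesis using mu0 y0 q by (simp add: add_increasing)
  qed
  have "(\<Sum>i\<in>{2..<K}. real (K choose i) * real ((s - K) choose (K - i)) * q ^ ((K choose 2) - (i choose 2)))
        \<le> (\<Sum>i\<in>{2..<K}. \<mu> * y\<^sup>2 * (1 / q) + 1)"
    by (intro sum_mono trm)
  also have "\<dots> = real (K - 2) * (\<mu> * y\<^sup>2 * (1 / q) + 1)" by simp
  also have "\<dots> \<le> real K * (\<mu> * y\<^sup>2 * (1 / q) + 1)"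
    using mu0 y0 q by (intro mult_right_mono) auto
  finally show ?thesis .
qed

definition AF :: "real \<Rightarrow> real \<Rightarrow> real \<Rightarrow> bool" where
  "AF p lb x \<longleftrightarrow>
     2 \<le> x \<and> 1 \<le> ln x \<and> 0 \<le> ln (ln x) \<and>
     3 \<le> (2 * ln x - 8 * ln (ln x)) / lb \<and>
     2 * ln x / lb < p * x / (2 * (ln x)\<^sup>2) - 2 \<and>
     (2 * ln x / lb)\<^sup>2 * exp (lb / 4 + ln x / 2 - 2 * ln (ln x)) \<le> (p * x / (2 * (ln x)\<^sup>2) - 2) - 2 * ln x / lb \<and>
     (2 * ln x / lb) * (p * x / (2 * (ln x)\<^sup>2)) * exp (7 * lb / 4 - 3 * ln x / 2 + 6 * ln (ln x)) \<le> 1 \<and>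
     exp (3 * lb) \<le> (p * x / (2 * (ln x)\<^sup>2) - 2) / (2 * ln x / lb) * exp (lb - ln x + 4 * ln (ln x)) \<and>
     16 * (p * x / (2 * (ln x)\<^sup>2)) * ln x * (2 * ln x / lb + 1) \<le> exp (3 * (2 * ln x - 8 * ln (ln x)) - 6 * lb) \<and>
     16 * (p * x / (2 * (ln x)\<^sup>2)) * ln x * (2 * ln x / lb) * ((2 * ln x / lb)\<^sup>2 / ((p * x / (2 * (ln x)\<^sup>2) - 2) - 2 * ln x / lb))\<^sup>2 * exp lb \<le> 1 \<and>
     6 * ln x / p\<^sup>2 \<le> x / (ln x)\<^sup>2 - 1 \<and>
     1 \<le> p * x / (2 * (ln x)\<^sup>2) - 2 \<and> 1 \<le> x / (ln x)\<^sup>2 - 1"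

lemma AF_eventually:
  assumes p: "0 < p" and lb: "0 < lb"
  shows "eventually (AF p lb) at_top"
proof -
  have e1: "eventually (\<lambda>x::real. 2 \<le> x) at_top" by real_asymp
  have e2: "eventually (\<lambda>x::real. 1 \<le> ln x) at_top" by real_asymp
  have e3: "eventually (\<lambda>x::real. 0 \<le> ln (ln x)) at_top" by real_asymp
  have e4: "eventually (\<lambda>x::real. 3 \<le> (2 * ln x - 8 * ln (ln x)) / lb) at_top" using lb by real_asymp
  have e5: "eventually (\<lambda>x::real. 2 * ln x / lb < p * x / (2 * (ln x)\<^sup>2) - 2) at_top" using p lb by real_asymp
  have e6: "eventually (\<lambda>x::real. (2 * ln x / lb)\<^sup>2 * exp (lb / 4 + ln x / 2 - 2 * ln (ln x)) \<le> (p * x / (2 * (ln x)\<^sup>2) - 2) - 2 * ln x / lb) at_top"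
    using p lb by real_asymp
  have e7: "eventually (\<lambda>x::real. (2 * ln x / lb) * (p * x / (2 * (ln x)\<^sup>2)) * exp (7 * lb / 4 - 3 * ln x / 2 + 6 * ln (ln x)) \<le> 1) at_top"
    using p lb by real_asymp
  have e8: "eventually (\<lambda>x::real. exp (3 * lb) \<le> (p * x / (2 * (ln x)\<^sup>2) - 2) / (2 * ln x / lb) * exp (lb - ln x + 4 * ln (ln x))) at_top"
    using p lb by real_asymp
  have e9: "eventually (\<lambda>x::real. 16 * (p * x / (2 * (ln x)\<^sup>2)) * ln x * (2 * ln x / lb + 1) \<le> exp (3 * (2 * ln x - 8 * ln (ln x)) - 6 * lb)) at_top"
    using p lb by real_asymp
  have e10: "eventually (\<lambda>x::real. 16 * (p * x / (2 * (ln x)\<^sup>2)) * ln x * (2 * ln x / lb) * ((2 * ln x / lb)\<^sup>2 / ((p * x / (2 * (ln x)\<^sup>2) - 2) - 2 * ln x / lb))\<^sup>2 * exp lb \<le> 1) at_top"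
    using p lb by real_asymp
  have e11: "eventually (\<lambda>x::real. 6 * ln x / p\<^sup>2 \<le> x / (ln x)\<^sup>2 - 1) at_top" using p by real_asymp
  have e12: "eventually (\<lambda>x::real. 1 \<le> p * x / (2 * (ln x)\<^sup>2) - 2) at_top" using p by real_asymp
  have e13: "eventually (\<lambda>x::real. 1 \<le> x / (ln x)\<^sup>2 - 1) at_top" by real_asymp
  show ?thesis unfolding AF_def
    by (intro eventually_conj e1 e2 e3 e4 e5 e6 e7 e8 e9 e10 e11 e12 e13)
qed

lemma AF_eventually_nat:
  assumes p: "0 < p" and lb: "0 < lb"
  shows "eventually (\<lambda>n::nat. AF p lb (real n)) sequentially"
  using AF_eventually[OF p lb] filterlim_real_sequentially by (rule eventually_compose_filterlim)

locale setting =
  fixes p :: real and n :: nat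
  assumes p0: "0 < p" and p1: "p < 1" and AFn: "AF p (ln (1 / (1 - p))) (real n)"
begin

definition "lb = ln (1 / (1 - p))"
definition "q = 1 - p"
definition "L = ln (real n)"
definition "xn = (2 * L - 8 * ln L) / lb"
definition "K = nat (star_size p n - 1)"
definition "m = nat \<lfloor>real n / L\<^sup>2\<rfloor>"
definition "s = nat \<lfloor>p * real m / 2\<rfloor>"
definition "Khi = 2 * L / lb"
definition "slo = p * real n / (2 * L\<^sup>2) - 2"
definition "shi = p * real n / (2 * L\<^sup>2)"

lemma lb_pos: "0 < lb"
  unfolding lb_def using p0 p1 by (simp add: ln_div)

lemma q_pos: "0 < q" and q_le1: "q \<le> 1" and q_lt1: "q < 1"
  unfolding q_def using p0 p1 by auto

lemma b_eq: "1 / q = exp lb"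
  unfolding lb_def q_def using p1 by simp

lemma q_eq: "q = exp (- lb)"
  using b_eq q_pos by (simp add: exp_minus field_simps)

lemma AF': "AF p lb (real n)" using AFn by (simp add: lb_def)

lemma L_ge1: "1 \<le> L" and lnL_ge0: "0 \<le> ln L" and n_ge2: "2 \<le> real n"
  using AF' by (auto simp: AF_def L_def)

lemma star_eq: "star_size p n = \<lfloor>xn\<rfloor>"
proof -
  have "2 * log (1 / (1 - p)) (real n) - 8 * log (1 / (1 - p)) (ln (real n)) = xn"
    unfolding xn_def log_def lb_def[symmetric] L_def using lb_pos by (simp add: field_simps)
  thus ?thesis unfolding star_size_def by simp
qed

lemma xn_ge3: "3 \<le> xn"
  using AF' by (simp add: AF_def xn_def L_def)

lemma K_real: "real K = of_int \<lfloor>xn\<rfloor> - 1"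
proof -
  have "3 \<le> \<lfloor>xn\<rfloor>" using xn_ge3 by linarith
  thus ?thesis unfolding K_def star_eq by simp
qed

lemma K_lo: "xn - 2 < real K" and K_hi: "real K \<le> xn - 1"
  using K_real by linarith+

lemma K_ge1: "1 \<le> K"
  using K_lo xn_ge3 by linarith

lemma K_le_Khi: "real K \<le> Khi"
proof -
  have "xn \<le> 2 * L / lb" unfolding xn_def using lnL_ge0 lb_pos by (simp add: divide_right_mono)
  thus ?thesis using K_hi by (simp add: Khi_def)
qed

lemma m_lo: "real n / L\<^sup>2 - 1 \<le> real m" and m_hi: "real m \<le> real n / L\<^sup>2"
proof -
  have "0 \<le> real n / L\<^sup>2" by simp
  thus "real n / L\<^sup>2 - 1 \<le> real m" "real m \<le> real n / L\<^sup>2" unfolding m_def by linarith+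
qed

lemma s_lo: "slo \<le> real s" and s_hi: "real s \<le> shi" and s_m: "2 * real s \<le> p * real m"
proof -
  have "0 \<le> p * real m / 2" using p0 by simp
  hence a: "p * real m / 2 - 1 \<le> real s" "real s \<le> p * real m / 2" unfolding s_def by linarith+
  have "p * (real n / L\<^sup>2 - 1) \<le> p * real m" using m_lo p0 by (intro mult_left_mono) auto
  hence "p * real n / (2 * L\<^sup>2) - p / 2 - 1 \<le> real s" using a by (simp add: field_simps)
  thus "slo \<le> real s" unfolding slo_def using p1 by linarith
  have "p * real m \<le> p * (real n / L\<^sup>2)" using m_hi p0 by (intro mult_left_mono) auto
  thus "real s \<le> shi" using a unfolding shi_def by (simp add: field_simps)
  show "2 * real s \<le> p * real m" using a by simp
qed

lemma Khi_slo: "Khi < slo"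
  using AF' by (simp add: AF_def Khi_def slo_def L_def)

lemma K_lt_s: "K < s"
  using K_le_Khi Khi_slo s_lo by linarith


definition "i1 = K div 2"
definition "y = real K ^ 2 / (real s - real K)"
definition "\<mu> = real (s choose K) * q ^ (K choose 2)"

lemma powr_b: "(1 / q) powr t = exp (t * lb)"
  using b_eq by (simp add: powr_def)

lemma powr_q: "q powr t = exp (- (t * lb))"
  using q_pos q_eq by (simp add: powr_def)

lemma sK_pos: "0 < real s - real K" using K_lt_s by simp

lemma y_nonneg: "0 \<le> y" using sK_pos by (simp add: y_def)

lemma y_le: "y \<le> Khi\<^sup>2 / (slo - Khi)"
proof -
  have "real K ^ 2 \<le> Khi\<^sup>2" using K_le_Khi by (intro power_mono) auto
  moreover have "slo - Khi \<le> real s - real K" using s_lo K_le_Khi by linarith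
  moreover have "0 < slo - Khi" using Khi_slo by simp
  ultimately show ?thesis unfolding y_def by (intro frac_le) auto
qed

lemma R2: "y * (1 / q) powr ((real i1 + 1) / 2) \<le> 1"
proof -
  have "real i1 \<le> real K / 2" unfolding i1_def by linarith
  hence "(real i1 + 1) / 2 \<le> xn / 4 + 1 / 4" using K_hi by simp
  hence "(1 / q) powr ((real i1 + 1) / 2) \<le> exp ((xn / 4 + 1 / 4) * lb)"
    unfolding powr_b using lb_pos by (intro exp_mono mult_right_mono) auto
  also have "(xn / 4 + 1 / 4) * lb = lb / 4 + L / 2 - 2 * ln L"
    using lb_pos by (simp add: xn_def field_simps)
  finally have B: "(1 / q) powr ((real i1 + 1) / 2) \<le> exp (lb / 4 + L / 2 - 2 * ln L)" .
  have A3: "Khi\<^sup>2 * exp (lb / 4 + L / 2 - 2 * ln L) \<le> slo - Khi"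
    using AF' by (simp add: AF_def Khi_def slo_def L_def)
  have "y * (1 / q) powr ((real i1 + 1) / 2) \<le> Khi\<^sup>2 / (slo - Khi) * exp (lb / 4 + L / 2 - 2 * ln L)"
    using y_le y_nonneg B by (intro mult_mono) auto
  also have "\<dots> \<le> 1" using A3 Khi_slo by (simp add: field_simps)
  finally show ?thesis .
qed

lemma R3: "real K * real s * q powr ((real K + real i1) / 2) \<le> 1"
proof -
  have "K = 2 * (K div 2) + K mod 2" by simp
  hence "real K = real (2 * (K div 2) + K mod 2)" by (rule arg_cong)
  hence "real K = 2 * real (K div 2) + real (K mod 2)" by (simp only: of_nat_add of_nat_mult of_nat_numeral)
  moreover have "real (K mod 2) \<le> 1" by simp
  moreover have "\<And>a r k::real. k = 2 * a + r \<Longrightarrow> r \<le> 1 \<Longrightarrow> (k - 1) / 2 \<le> a" by (simp add: field_simps)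
  ultimately have "real i1 \<ge> (real K - 1) / 2" unfolding i1_def by blast
  hence "(real K + real i1) / 2 \<ge> 3 * xn / 4 - 7 / 4" using K_lo by simp
  hence "q powr ((real K + real i1) / 2) \<le> exp (- ((3 * xn / 4 - 7 / 4) * lb))"
    unfolding powr_q using lb_pos by (intro exp_mono) (simp add: mult_right_mono)
  also have "- ((3 * xn / 4 - 7 / 4) * lb) = 7 * lb / 4 - 3 * L / 2 + 6 * ln L"
    using lb_pos by (simp add: xn_def field_simps)
  finally have B: "q powr ((real K + real i1) / 2) \<le> exp (7 * lb / 4 - 3 * L / 2 + 6 * ln L)" .
  have A4: "Khi * shi * exp (7 * lb / 4 - 3 * L / 2 + 6 * ln L) \<le> 1"
    using AF' by (simp add: AF_def Khi_def shi_def L_def)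
  have "real K * real s * q powr ((real K + real i1) / 2) \<le> Khi * shi * exp (7 * lb / 4 - 3 * L / 2 + 6 * ln L)"
    using K_le_Khi s_hi B by (intro mult_mono) auto
  thus ?thesis using A4 by simp
qed

lemma R4a: "16 * real s * L * (real K + 1) \<le> \<mu>"
proof -
  have Kpos: "0 < real K" using K_ge1 by simp
  have sKle: "K \<le> s" using K_lt_s by simp
  have c1: "(real s / real K) ^ K \<le> real (s choose K)"
    using binomial_ge_n_over_k_pow_k[OF sKle] by simp
  have qe: "q ^ (K choose 2) = (q powr ((real K - 1) / 2)) ^ K"
  proof -
    have "q ^ (K choose 2) = q powr (real (K choose 2))" using q_pos by (simp add: powr_realpow)
    also have "real (K choose 2) = real K * ((real K - 1) / 2)" by (simp add: real_choose_two)
    also have "q powr (real K * ((real K - 1) / 2)) = (q powr ((real K - 1) / 2)) ^ K"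
      using q_pos by (simp add: powr_power)
    finally show ?thesis .
  qed
  have "(real K - 1) / 2 * lb \<le> (xn - 2) / 2 * lb" using K_hi lb_pos by (intro mult_right_mono) auto
  moreover have "(xn - 2) / 2 * lb = L - 4 * ln L - lb"
    using lb_pos by (simp add: xn_def field_simps)
  ultimately have "lb - L + 4 * ln L \<le> - ((real K - 1) / 2 * lb)" by linarith
  hence qb: "exp (lb - L + 4 * ln L) \<le> q powr ((real K - 1) / 2)"
    unfolding powr_q by simp
  have sK: "slo / Khi \<le> real s / real K"
    using s_lo K_le_Khi Kpos Khi_slo AF' by (intro frac_le) (auto simp: AF_def slo_def)
  have A5: "exp (3 * lb) \<le> slo / Khi * exp (lb - L + 4 * ln L)"
    using AF' by (simp add: AF_def Khi_def slo_def L_def)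
  have beta: "exp (3 * lb) \<le> real s / real K * q powr ((real K - 1) / 2)"
  proof -
    have "slo / Khi * exp (lb - L + 4 * ln L) \<le> real s / real K * q powr ((real K - 1) / 2)"
      using sK qb Kpos by (intro mult_mono) auto
    thus ?thesis using A5 by simp
  qed
  have "exp (3 * (2 * L - 8 * ln L) - 6 * lb) = exp (3 * lb * (xn - 2))"
    using lb_pos by (simp add: xn_def field_simps)
  also have "\<dots> \<le> exp (3 * lb * real K)" using K_lo lb_pos by simp
  also have "\<dots> = exp (3 * lb) ^ K" by (simp add: exp_of_nat2_mult[symmetric] mult.commute)
  also have "\<dots> \<le> (real s / real K * q powr ((real K - 1) / 2)) ^ K"
    using beta by (intro power_mono) auto
  also have "\<dots> = (real s / real K) ^ K * (q powr ((real K - 1) / 2)) ^ K" by (rule power_mult_distrib)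
  also have "\<dots> = (real s / real K) ^ K * q ^ (K choose 2)" by (simp only: qe)
  also have "\<dots> \<le> \<mu>" unfolding \<mu>_def using c1 q_pos by (intro mult_right_mono) auto
  finally have mu: "exp (3 * (2 * L - 8 * ln L) - 6 * lb) \<le> \<mu>" .
  have A6: "16 * shi * L * (Khi + 1) \<le> exp (3 * (2 * L - 8 * ln L) - 6 * lb)"
    using AF' by (simp add: AF_def Khi_def shi_def L_def)
  have "16 * real s * L * (real K + 1) \<le> 16 * shi * L * (Khi + 1)"
    using s_hi K_le_Khi L_ge1 by (intro mult_mono) auto
  thus ?thesis using A6 mu by linarith
qed

lemma R4b: "16 * real s * L * real K * y\<^sup>2 * (1 / q) \<le> 1"
proof -
  have A7: "16 * shi * L * Khi * (Khi\<^sup>2 / (slo - Khi))\<^sup>2 * exp lb \<le> 1"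
    using AF' by (simp add: AF_def Khi_def shi_def slo_def L_def)
  have "16 * real s * L * real K * y\<^sup>2 * (1 / q) \<le> 16 * shi * L * Khi * (Khi\<^sup>2 / (slo - Khi))\<^sup>2 * exp lb"
    unfolding b_eq using s_hi K_le_Khi L_ge1 y_le y_nonneg
    by (intro mult_mono power_mono) auto
  thus ?thesis using A7 by simp
qed


lemma U_bound: "(\<Sum>i\<in>{2..<K}. real (K choose i) * real ((s - K) choose (K - i)) * q ^ ((K choose 2) - (i choose 2)))
          \<le> real K * (\<mu> * y\<^sup>2 * (1 / q) + 1)"
  unfolding \<mu>_def y_def
  by (rule sum_u_bound[OF q_pos q_le1 K_lt_s]) (use R2 R3 in \<open>simp_all add: y_def\<close>)

lemma D_eq: "real (s choose K) * (\<Sum>i\<in>{2..<K}. real ((K choose i) * ((s - K) choose (K - i))) * q ^ (2 * (K choose 2) - (i choose 2)))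
   = \<mu> * (\<Sum>i\<in>{2..<K}. real (K choose i) * real ((s - K) choose (K - i)) * q ^ ((K choose 2) - (i choose 2)))"
proof -
  have "(\<Sum>i\<in>{2..<K}. real ((K choose i) * ((s - K) choose (K - i))) * q ^ (2 * (K choose 2) - (i choose 2)))
        = (\<Sum>i\<in>{2..<K}. q ^ (K choose 2) * (real (K choose i) * real ((s - K) choose (K - i)) * q ^ ((K choose 2) - (i choose 2))))"
  proof (intro sum.cong refl)
    fix i assume "i \<in> {2..<K}"
    hence "(i choose 2) \<le> (K choose 2)" by (intro binomial_right_mono) auto
    hence "2 * (K choose 2) - (i choose 2) = (K choose 2) + ((K choose 2) - (i choose 2))" by simp
    thus "real ((K choose i) * ((s - K) choose (K - i))) * q ^ (2 * (K choose 2) - (i choose 2)) =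
          q ^ (K choose 2) * (real (K choose i) * real ((s - K) choose (K - i)) * q ^ ((K choose 2) - (i choose 2)))"
      by (simp add: power_add)
  qed
  thus ?thesis by (simp add: \<mu>_def sum_distrib_left mult.assoc)
qed

lemma P1_single:
  assumes S: "S \<subseteq> {1..n}" "card S = s"
  shows "measure_pmf.prob (Gnp n p) {G. \<not> (\<exists>L\<subseteq>S. card L = K \<and> indepset G L)} \<le> exp (- (2 * real s * L))"
proof (rule no_indep_bound[OF _ _ S])
  show "0 \<le> p" "p \<le> 1" using p0 p1 by auto
  have mu: "real (s choose K) * (1 - p) ^ (K choose 2) = \<mu>" by (simp add: \<mu>_def q_def)
  have mu0: "0 \<le> \<mu>" using q_pos by (simp add: \<mu>_def)
  have L0: "0 \<le> L" using L_ge1 by simp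
  have Ls: "0 \<le> real s * L" using L_ge1 by simp
  show "0 \<le> 2 * real s * L" using Ls by (simp add: mult.commute)
  have R4a': "16 * real s * L * real K \<le> \<mu>" "4 * real s * L \<le> \<mu>"
  proof -
    have "16 * real s * L * real K = 16 * (real s * L) * real K" by simp
    also have "\<dots> \<le> 16 * (real s * L) * (real K + 1)" using Ls L0 by (intro mult_left_mono) auto
    also have "\<dots> = 16 * real s * L * (real K + 1)" by simp
    finally show "16 * real s * L * real K \<le> \<mu>" using R4a by linarith
    have "4 * real s * L = 4 * (real s * L) * 1" by simp
    also have "\<dots> \<le> 16 * (real s * L) * (real K + 1)" using Ls L0 by (intro mult_mono) auto
    also have "\<dots> = 16 * real s * L * (real K + 1)" by simp
    finally show "4 * real s * L \<le> \<mu>" using R4a by linarith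
  qed
  show "2 * (2 * real s * L) \<le> real (s choose K) * (1 - p) ^ (K choose 2)"
    using R4a' mu by simp
  define U where "U = (\<Sum>i\<in>{2..<K}. real (K choose i) * real ((s - K) choose (K - i)) * q ^ ((K choose 2) - (i choose 2)))"
  have U0: "0 \<le> U" unfolding U_def using q_pos by (intro sum_nonneg) auto
  have "4 * (real (s choose K) * (\<Sum>i\<in>{2..<K}. real ((K choose i) * ((s - K) choose (K - i))) * (1 - p) ^ (2 * (K choose 2) - (i choose 2)))) * (2 * real s * L)
        = 8 * (real s * L) * \<mu> * U"
    using D_eq by (simp add: q_def U_def)
  also have "\<dots> \<le> 8 * (real s * L) * \<mu> * (real K * (\<mu> * y\<^sup>2 * (1 / q) + 1))"
    using U_bound Ls mu0 by (intro mult_left_mono) (auto simp: U_def)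
  also have "\<dots> = \<mu> * (8 * real s * L * real K * y\<^sup>2 * (1 / q) * \<mu> + 8 * real s * L * real K)"
    by (simp add: algebra_simps)
  also have "\<dots> \<le> \<mu> * (\<mu> / 2 + \<mu> / 2)"
  proof (intro mult_left_mono add_mono mu0)
    have "8 * real s * L * real K * y\<^sup>2 * (1 / q) * \<mu> = (16 * real s * L * real K * y\<^sup>2 * (1 / q)) * (\<mu> / 2)" by simp
    also have "\<dots> \<le> 1 * (\<mu> / 2)" using R4b mu0 by (intro mult_right_mono) auto
    finally show "8 * real s * L * real K * y\<^sup>2 * (1 / q) * \<mu> \<le> \<mu> / 2" by simp
    show "8 * real s * L * real K \<le> \<mu> / 2" using R4a' by simp
  qed
  also have "\<dots> = (real (s choose K) * (1 - p) ^ (K choose 2))\<^sup>2" using mu by (simp add: power2_eq_square)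
  finally show "4 * (real (s choose K) * (\<Sum>i\<in>{2..<K}. real ((K choose i) * ((s - K) choose (K - i))) * (1 - p) ^ (2 * (K choose 2) - (i choose 2)))) * (2 * real s * L)
        \<le> (real (s choose K) * (1 - p) ^ (K choose 2))\<^sup>2" .
qed


lemma s_ge1: "1 \<le> s"
proof -
  have "1 \<le> slo" using AF' by (simp add: AF_def slo_def L_def)
  thus ?thesis using s_lo by linarith
qed

lemma m_ge1: "1 \<le> m" and m_big: "6 * L / p\<^sup>2 \<le> real m"
proof -
  have "1 \<le> real n / L\<^sup>2 - 1" "6 * L / p\<^sup>2 \<le> real n / L\<^sup>2 - 1" using AF' by (simp_all add: AF_def L_def)
  thus "1 \<le> m" "6 * L / p\<^sup>2 \<le> real m" using m_lo by linarith+
qed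

lemma good_from:
  assumes P1: "\<forall>S. S \<subseteq> {1..n} \<and> card S = s \<longrightarrow> (\<exists>L\<subseteq>S. card L = K \<and> indepset G L)"
  assumes P2: "\<forall>A B. A \<subseteq> {1..n} \<and> B \<subseteq> {1..n} \<and> A \<inter> B = {} \<and> card A = m \<and> card B = m \<longrightarrow> (\<exists>c\<in>A. s \<le> card (nbhd n G c \<inter> B))"
  shows "good_event n p G"
  unfolding good_event_def
proof (intro allI impI)
  fix A B assume h: "A \<subseteq> nbhd n G 1 \<and> B \<subseteq> {1..n} - {1} \<and> A \<inter> B = {} \<and>
        card A = nat \<lfloor>real n / (ln (real n))\<^sup>2\<rfloor> \<and> card B = nat \<lfloor>real n / (ln (real n))\<^sup>2\<rfloor>"
  have A: "A \<subseteq> {1..n}" using h by (auto simp: nbhd_def)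
  have cm: "card A = m" "card B = m" using h by (simp_all add: m_def L_def)
  have B: "B \<subseteq> {1..n}" "A \<inter> B = {}" using h by auto
  have "A \<subseteq> {1..n} \<and> B \<subseteq> {1..n} \<and> A \<inter> B = {} \<and> card A = m \<and> card B = m"
    using A B cm by blast
  hence "\<exists>c\<in>A. s \<le> card (nbhd n G c \<inter> B)" by (rule P2[rule_format])
  then obtain c where c: "c \<in> A" "s \<le> card (nbhd n G c \<inter> B)" by blast
  have fin: "finite (nbhd n G c \<inter> B)" by (simp add: nbhd_def)
  obtain S where S: "S \<subseteq> nbhd n G c \<inter> B" "card S = s"
    using obtain_subset_with_card_n[OF c(2)] by blast
  have nb: "nbhd n G c \<subseteq> {1..n}" unfolding nbhd_def by blast
  have "S \<subseteq> {1..n}" using S(1) nb by blast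
  hence "\<exists>L\<subseteq>S. card L = K \<and> indepset G L" using S(2) by (intro P1[rule_format] conjI)
  then obtain Ls where Ls: "Ls \<subseteq> S" "card Ls = K" "indepset G Ls" by blast
  have i1: "Ls \<subseteq> B" using Ls(1) S(1) by blast
  have i2: "card Ls = nat (star_size p n - 1)" using Ls(2) by (simp add: K_def)
  have i3: "c \<notin> Ls" using Ls(1) S(1) c(1) B(2) by blast
  have i4: "\<forall>x\<in>Ls. adj G c x"
  proof
    fix x assume "x \<in> Ls"
    hence "x \<in> nbhd n G c" using Ls(1) S(1) by blast
    thus "adj G c x" by (simp add: nbhd_def)
  qed
  have i5: "\<forall>x\<in>Ls. \<forall>y\<in>Ls. \<not> adj G x y" using Ls(3) by (simp add: indepset_def)
  have "induced_star G c Ls" unfolding induced_star_def using i3 i4 i5 by blast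
  thus "\<exists>c\<in>A. \<exists>L\<subseteq>B. card L = nat (star_size p n - 1) \<and> induced_star G c L"
    using c(1) i1 i2 by blast
qed

lemma pow_exp: "real n ^ k = exp (real k * L)"
proof -
  have "real n = exp L" using n_ge2 by (simp add: L_def)
  thus ?thesis by (simp add: exp_of_nat_mult)
qed

lemma bad1_bound:
  "measure_pmf.prob (Gnp n p) {G. \<exists>S. S \<subseteq> {1..n} \<and> card S = s \<and> \<not> (\<exists>L\<subseteq>S. card L = K \<and> indepset G L)} \<le> exp (- L)"
proof -
  define SS where "SS = {S. S \<subseteq> {1..n} \<and> card S = s}"
  have fSS: "finite SS" by (simp add: SS_def)
  have eq: "{G. \<exists>S. S \<subseteq> {1..n} \<and> card S = s \<and> \<not> (\<exists>L\<subseteq>S. card L = K \<and> indepset G L)} =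
            (\<Union>S\<in>SS. {G. \<not> (\<exists>L\<subseteq>S. card L = K \<and> indepset G L)})"
    by (auto simp: SS_def)
  have "measure_pmf.prob (Gnp n p) (\<Union>S\<in>SS. {G. \<not> (\<exists>L\<subseteq>S. card L = K \<and> indepset G L)})
        \<le> (\<Sum>S\<in>SS. measure_pmf.prob (Gnp n p) {G. \<not> (\<exists>L\<subseteq>S. card L = K \<and> indepset G L)})"
    by (rule measure_pmf.finite_measure_subadditive_finite[OF fSS]) simp
  also have "\<dots> \<le> (\<Sum>S\<in>SS. exp (- (2 * real s * L)))"
    by (intro sum_mono P1_single) (auto simp: SS_def)
  also have "\<dots> = real (n choose s) * exp (- (2 * real s * L))"
    by (simp add: SS_def n_subsets)
  also have "\<dots> \<le> real n ^ s * exp (- (2 * real s * L))"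
    by (intro mult_right_mono choose_le_pow_real) simp
  also have "\<dots> = exp (- (real s * L))"
    by (simp add: pow_exp exp_add[symmetric])
  also have "\<dots> \<le> exp (- L)"
    using s_ge1 L_ge1 by simp
  finally have "measure_pmf.prob (Gnp n p) (\<Union>S\<in>SS. {G. \<not> (\<exists>L\<subseteq>S. card L = K \<and> indepset G L)}) \<le> exp (- L)" .
  thus ?thesis by (simp only: eq)
qed

lemma bad2_bound:
  "measure_pmf.prob (Gnp n p) {G. \<exists>A B. A \<subseteq> {1..n} \<and> B \<subseteq> {1..n} \<and> A \<inter> B = {} \<and> card A = m \<and> card B = m \<and> \<not> (\<exists>c\<in>A. s \<le> card (nbhd n G c \<inter> B))} \<le> exp (- L)"
proof -
  define PP where "PP = {(A, B). A \<subseteq> {1..n} \<and> B \<subseteq> {1..n} \<and> A \<inter> B = {} \<and> card A = m \<and> card B = m}"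
  define SM where "SM = {A. A \<subseteq> {1..n} \<and> card A = m}"
  have PPsub: "PP \<subseteq> SM \<times> SM" unfolding PP_def SM_def by blast
  have fSM: "finite SM" by (simp add: SM_def)
  have fPP: "finite PP" using PPsub fSM finite_subset by blast
  have eq: "{G. \<exists>A B. A \<subseteq> {1..n} \<and> B \<subseteq> {1..n} \<and> A \<inter> B = {} \<and> card A = m \<and> card B = m \<and> \<not> (\<exists>c\<in>A. s \<le> card (nbhd n G c \<inter> B))} =
            (\<Union>AB\<in>PP. {G. \<forall>c\<in>fst AB. card (nbhd n G c \<inter> snd AB) < s})"
  proof (rule set_eqI, rule iffI)
    fix G assume "G \<in> {G. \<exists>A B. A \<subseteq> {1..n} \<and> B \<subseteq> {1..n} \<and> A \<inter> B = {} \<and> card A = m \<and> card B = m \<and> \<not> (\<exists>c\<in>A. s \<le> card (nbhd n G c \<inter> B))}"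
    then obtain A B where h: "A \<subseteq> {1..n}" "B \<subseteq> {1..n}" "A \<inter> B = {}" "card A = m" "card B = m"
        "\<not> (\<exists>c\<in>A. s \<le> card (nbhd n G c \<inter> B))" by blast
    have "(A, B) \<in> PP" unfolding PP_def using h(1-5) by blast
    moreover have "G \<in> {G. \<forall>c\<in>fst (A, B). card (nbhd n G c \<inter> snd (A, B)) < s}"
      using h(6) by (simp add: not_le)
    ultimately show "G \<in> (\<Union>AB\<in>PP. {G. \<forall>c\<in>fst AB. card (nbhd n G c \<inter> snd AB) < s})" by blast
  next
    fix G assume "G \<in> (\<Union>AB\<in>PP. {G. \<forall>c\<in>fst AB. card (nbhd n G c \<inter> snd AB) < s})"
    then obtain AB where AB: "AB \<in> PP" "\<forall>c\<in>fst AB. card (nbhd n G c \<inter> snd AB) < s" by blast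
    obtain A B where AB2: "AB = (A, B)" by (cases AB)
    have h: "A \<subseteq> {1..n}" "B \<subseteq> {1..n}" "A \<inter> B = {}" "card A = m" "card B = m"
      using AB(1) unfolding AB2 PP_def by blast+
    have "\<not> (\<exists>c\<in>A. s \<le> card (nbhd n G c \<inter> B))" using AB(2) unfolding AB2 by (simp add: not_le)
    thus "G \<in> {G. \<exists>A B. A \<subseteq> {1..n} \<and> B \<subseteq> {1..n} \<and> A \<inter> B = {} \<and> card A = m \<and> card B = m \<and> \<not> (\<exists>c\<in>A. s \<le> card (nbhd n G c \<inter> B))}"
      using h by blast
  qed
  have "measure_pmf.prob (Gnp n p) (\<Union>AB\<in>PP. {G. \<forall>c\<in>fst AB. card (nbhd n G c \<inter> snd AB) < s})
        \<le> (\<Sum>AB\<in>PP. measure_pmf.prob (Gnp n p) {G. \<forall>c\<in>fst AB. card (nbhd n G c \<inter> snd AB) < s})"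
    by (rule measure_pmf.finite_measure_subadditive_finite[OF fPP]) simp
  also have "\<dots> \<le> (\<Sum>AB\<in>PP. exp (- (p\<^sup>2 * (real m)\<^sup>2 / 2)))"
  proof (rule sum_mono)
    fix AB assume "AB \<in> PP"
    obtain A B where AB0: "AB = (A, B)" by (cases AB)
    have AB: "AB = (A, B)" "A \<subseteq> {1..n}" "B \<subseteq> {1..n}" "A \<inter> B = {}" "card A = m" "card B = m"
      using \<open>AB \<in> PP\<close> unfolding AB0 PP_def by blast+
    show "measure_pmf.prob (Gnp n p) {G. \<forall>c\<in>fst AB. card (nbhd n G c \<inter> snd AB) < s} \<le> exp (- (p\<^sup>2 * (real m)\<^sup>2 / 2))"
    proof -
      have "measure_pmf.prob (Gnp n p) {G. \<forall>c\<in>A. card (nbhd n G c \<inter> B) < s} \<le> exp (- (p\<^sup>2 * real (m\<^sup>2) / 2))"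
        by (rule P2_bound[OF p0 p1 AB(2,5,3,6,4)]) (use m_ge1 s_m in auto)
      thus ?thesis unfolding AB(1) fst_conv snd_conv by simp
    qed
  qed
  also have "\<dots> = real (card PP) * exp (- (p\<^sup>2 * (real m)\<^sup>2 / 2))" by simp
  also have "\<dots> \<le> (real n ^ m * real n ^ m) * exp (- (p\<^sup>2 * (real m)\<^sup>2 / 2))"
  proof (intro mult_right_mono)
    have "card PP \<le> card (SM \<times> SM)" using PPsub fSM by (intro card_mono) auto
    also have "\<dots> = (n choose m) * (n choose m)" by (simp add: SM_def n_subsets card_cartesian_product)
    finally have "real (card PP) \<le> real (n choose m) * real (n choose m)" by (simp flip: of_nat_mult)
    also have "\<dots> \<le> real n ^ m * real n ^ m" by (intro mult_mono choose_le_pow_real) auto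
    finally show "real (card PP) \<le> real n ^ m * real n ^ m" .
  qed simp
  also have "\<dots> = exp (real m * (2 * L - p\<^sup>2 * real m / 2))"
    by (simp add: pow_exp exp_add[symmetric] power2_eq_square algebra_simps)
  also have "\<dots> \<le> exp (- L)"
  proof -
    have p2: "0 < p\<^sup>2" using p0 by simp
    have "6 * L \<le> p\<^sup>2 * real m" using m_big p2 by (simp add: field_simps)
    hence neg: "2 * L - p\<^sup>2 * real m / 2 \<le> - L" by simp
    have "real m * (2 * L - p\<^sup>2 * real m / 2) \<le> 1 * (2 * L - p\<^sup>2 * real m / 2)"
      using m_ge1 neg L_ge1 by (intro mult_right_mono_neg) auto
    thus ?thesis using neg by simp
  qed
  finally have "measure_pmf.prob (Gnp n p) (\<Union>AB\<in>PP. {G. \<forall>c\<in>fst AB. card (nbhd n G c \<inter> snd AB) < s}) \<le> exp (- L)" .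
  thus ?thesis by (simp only: eq)
qed

lemma good_prob: "1 - 2 / real n \<le> measure_pmf.prob (Gnp n p) {G. good_event n p G}"
proof -
  define B1 where "B1 = {G. \<exists>S. S \<subseteq> {1..n} \<and> card S = s \<and> \<not> (\<exists>L\<subseteq>S. card L = K \<and> indepset G L)}"
  define B2 where "B2 = {G. \<exists>A B. A \<subseteq> {1..n} \<and> B \<subseteq> {1..n} \<and> A \<inter> B = {} \<and> card A = m \<and> card B = m \<and> \<not> (\<exists>c\<in>A. s \<le> card (nbhd n G c \<inter> B))}"
  have sub: "UNIV - (B1 \<union> B2) \<subseteq> {G. good_event n p G}"
  proof
    fix G assume "G \<in> UNIV - (B1 \<union> B2)"
    hence "G \<notin> B1" "G \<notin> B2" by auto
    hence h1: "\<forall>S. S \<subseteq> {1..n} \<and> card S = s \<longrightarrow> (\<exists>L\<subseteq>S. card L = K \<and> indepset G L)"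
      and h2: "\<forall>A B. A \<subseteq> {1..n} \<and> B \<subseteq> {1..n} \<and> A \<inter> B = {} \<and> card A = m \<and> card B = m \<longrightarrow> (\<exists>c\<in>A. s \<le> card (nbhd n G c \<inter> B))"
      unfolding B1_def B2_def by blast+
    show "G \<in> {G. good_event n p G}" using good_from[OF h1 h2] by simp
  qed
  have c: "measure_pmf.prob (Gnp n p) (UNIV - (B1 \<union> B2)) = 1 - measure_pmf.prob (Gnp n p) (B1 \<union> B2)"
    using measure_pmf.prob_compl[of "B1 \<union> B2" "Gnp n p"] by simp
  have u: "measure_pmf.prob (Gnp n p) (B1 \<union> B2) \<le> measure_pmf.prob (Gnp n p) B1 + measure_pmf.prob (Gnp n p) B2"
    by (rule measure_Un_le) simp_all
  have b1: "measure_pmf.prob (Gnp n p) B1 \<le> exp (- L)" unfolding B1_def by (rule bad1_bound)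
  have b2: "measure_pmf.prob (Gnp n p) B2 \<le> exp (- L)" unfolding B2_def by (rule bad2_bound)
  have e: "exp (- L) = 1 / real n" using n_ge2 by (simp add: L_def exp_minus inverse_eq_divide)
  have e2: "2 / real n = 1 / real n + 1 / real n" by simp
  have "1 - 2 / real n \<le> measure_pmf.prob (Gnp n p) (UNIV - (B1 \<union> B2))"
    using c u b1 b2 e e2 by linarith
  also have "\<dots> \<le> measure_pmf.prob (Gnp n p) {G. good_event n p G}"
    by (rule measure_pmf.finite_measure_mono[OF sub]) simp
  finally show ?thesis .
qed

end

theorem claim6:
  fixes p :: real
  assumes "0 < p" and "p < 1"
  shows "(\<lambda>n. measure_pmf.prob (Gnp n p) {G. good_event n p G}) \<longlonglongrightarrow> 1"
proof (rule tendsto_sandwich)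
  have lbp: "0 < ln (1 / (1 - p))" using assms by (simp add: ln_div)
  show "eventually (\<lambda>n. 1 - 2 / real n \<le> measure_pmf.prob (Gnp n p) {G. good_event n p G}) sequentially"
    using AF_eventually_nat[OF assms(1) lbp]
  proof (rule eventually_mono)
    fix n assume "AF p (ln (1 / (1 - p))) (real n)"
    then interpret setting p n using assms by unfold_locales
    show "1 - 2 / real n \<le> measure_pmf.prob (Gnp n p) {G. good_event n p G}" by (rule good_prob)
  qed
  show "eventually (\<lambda>n. measure_pmf.prob (Gnp n p) {G. good_event n p G} \<le> 1) sequentially"
    by simp
  show "(\<lambda>n. 1 - 2 / real n) \<longlonglongrightarrow> 1" by real_asymp
  show "(\<lambda>n. 1) \<longlonglongrightarrow> (1::real)" by simp
qed

end
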